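(* Let $k$ be a field and let $F(X,Y)$ be an irreducible element of $A=k[X,Y]$. Then $A/(F)$ is $k$-rational if and only if there exist $x(T),y(T),z(T)\in k[T]$ such that: (1) $z(T)\ne0$, $\{x(T)/z(T),\,y(T)/z(T)\}\not\subseteq k$, and $F\big(x(T)/z(T),\,y(T)/z(T)\big)=0$; (2) $\max(\deg_T x,\deg_T y,\deg_T z)\le \deg_X F+\deg_Y F$.
   Context: $A/(F)$ is $k$-rational means that $F$ is irreducible in $A$ and $\operatorname{Frac}(A/(F))$ is a purely transcendental extension of $k$ of transcendence degree $1$. $T$ is an indeterminate. *)

theory Defs
  imports "HOL-Computational_Algebra.Polynomial" "HOL-Computational_Algebra.Fraction_Field"
begin

text \<open>A = k[X,Y] is rendered as 'a poly poly: outer variable Y, coefficients in k[X].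
  k(T) is rendered as 'a poly fract.\<close>

definition to_fract :: "'a::idom \<Rightarrow> 'a fract" where
  "to_fract a = Fract a 1"

definition const_fract :: "'a::field \<Rightarrow> 'a poly fract" where
  "const_fract c = to_fract [:c:]"

definition eval2 :: "'a::field poly poly \<Rightarrow> 'a poly fract \<Rightarrow> 'a poly fract \<Rightarrow> 'a poly fract" where
  "eval2 G u v = poly (map_poly (\<lambda>c. poly (map_poly const_fract c) u) G) v"

definition degX :: "'a::zero poly poly \<Rightarrow> nat" where
  "degX F = Max ((\<lambda>i. degree (coeff F i)) ` {..degree F})"

definition degY :: "'a::zero poly poly \<Rightarrow> nat" where
  "degY F = degree F"

text \<open>k-rational: F irreducible and Frac(A/(F)) is k-isomorphic to k(T). A k-algebra
  embedding A/(F) -> k(T) is evaluation at some (u,v) whose kernel is exactly (F);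
  k(T) is the fraction field of the image iff every element of k(T) is a quotient of
  values of the embedding.\<close>
definition k_rational :: "'a::field poly poly \<Rightarrow> bool" where
  "k_rational F \<longleftrightarrow> irreducible F \<and>
     (\<exists>u v. (\<forall>G. eval2 G u v = 0 \<longleftrightarrow> F dvd G) \<and>
            (\<forall>w. \<exists>G H. eval2 H u v \<noteq> 0 \<and> w = eval2 G u v / eval2 H u v))"

end

theory Submission
  imports Defs "HOL-Computational_Algebra.Polynomial_Factorial" "HOL-Computational_Algebra.Euclidean_Algorithm"
begin

hide_const (open) Polynomial_Factorial.to_fract

instantiation fract :: (idom)
  "{unique_euclidean_ring, normalization_euclidean_semiring, normalization_semidom_multiplicative}"
begin
definition [simp]: "normalize_fract = (\<lambda>x::'a fract. if x = 0 then 0 else (1::'a fract))"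
definition [simp]: "unit_factor_fract = (\<lambda>x::'a fract. x)"
definition [simp]: "modulo_fract = (\<lambda>x y::'a fract. if y = 0 then x else (0::'a fract))"
definition [simp]: "euclidean_size_fract = (\<lambda>x::'a fract. if x = 0 then 0 else (1::nat))"
definition [simp]: "division_segment (x :: 'a fract) = (1::'a fract)"
instance
  by standard
    (simp_all add: dvd_field_iff field_split_simps split: if_splits)
end

instantiation fract :: (idom) euclidean_ring_gcd
begin
definition gcd_fract :: "'a fract \<Rightarrow> 'a fract \<Rightarrow> 'a fract" where
  "gcd_fract = Euclidean_Algorithm.gcd"
definition lcm_fract :: "'a fract \<Rightarrow> 'a fract \<Rightarrow> 'a fract" where
  "lcm_fract = Euclidean_Algorithm.lcm"
definition Gcd_fract :: "'a fract set \<Rightarrow> 'a fract" where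
 "Gcd_fract = Euclidean_Algorithm.Gcd"
definition Lcm_fract :: "'a fract set \<Rightarrow> 'a fract" where
 "Lcm_fract = Euclidean_Algorithm.Lcm"
instance by standard (simp_all add: gcd_fract_def lcm_fract_def Gcd_fract_def Lcm_fract_def)
end

instance fract :: (idom) field_gcd ..

locale rhom =
  fixes f :: "'a::comm_ring_1 \<Rightarrow> 'b::comm_ring_1"
  assumes hadd: "f (x + y) = f x + f y" and hmult: "f (x * y) = f x * f y" and hone: "f 1 = 1"
begin
lemma hzero[simp]: "f 0 = 0"
  using hadd[of 0 0] by simp
lemma huminus[simp]: "f (- x) = - f x"
proof -
  have "f x + f (-x) = 0" using hadd[of x "-x"] by simp
  thus ?thesis by (simp add: add_eq_0_iff)
qed
lemma hdiff[simp]: "f (x - y) = f x - f y"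
  using hadd[of x "-y"] by simp
lemma hsum: "f (sum g A) = sum (\<lambda>x. f (g x)) A"
  by (induction A rule: infinite_finite_induct) (auto simp: hadd)
lemma hpower[simp]: "f (x ^ n) = f x ^ n"
  by (induction n) (auto simp: hmult hone)
lemmas [simp] = hadd hmult hone

lemma map_add[simp]: "map_poly f (p + q) = map_poly f p + map_poly f q"
  by (rule poly_eqI) (simp add: coeff_map_poly)
lemma map_uminus[simp]: "map_poly f (- p) = - map_poly f p"
  by (rule poly_eqI) (simp add: coeff_map_poly)
lemma map_diff[simp]: "map_poly f (p - q) = map_poly f p - map_poly f q"
  by (rule poly_eqI) (simp add: coeff_map_poly)
lemma map_mult[simp]: "map_poly f (p * q) = map_poly f p * map_poly f q"
  by (rule poly_eqI) (simp add: coeff_map_poly coeff_mult hsum)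
lemma map_one[simp]: "map_poly f 1 = 1"
  by simp
lemma map_smult[simp]: "map_poly f (smult c p) = smult (f c) (map_poly f p)"
  by (rule poly_eqI) (simp add: coeff_map_poly)
lemma map_pCons[simp]: "map_poly f (pCons c p) = pCons (f c) (map_poly f p)"
  by (rule poly_eqI) (simp add: coeff_map_poly coeff_pCons split: nat.split)
lemma map_const[simp]: "map_poly f [:c:] = [:f c:]"
  by simp
lemma map_power[simp]: "map_poly f (p ^ n) = map_poly f p ^ n"
  by (induction n) auto
lemma poly_map: "poly (map_poly f p) (f x) = f (poly p x)"
  by (induction p) auto
lemma rhom_map: "rhom (map_poly f)"
  by unfold_locales auto
lemma rhom_poly: "rhom (\<lambda>p. poly (map_poly f p) x)"
  by unfold_locales (auto simp: poly_mult)
end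

lemma rhom_comp: "rhom f \<Longrightarrow> rhom g \<Longrightarrow> rhom (\<lambda>x. f (g x))"
  unfolding rhom_def by auto

lemma rhom_id: "rhom (\<lambda>x. x)" by unfold_locales auto

lemma tfe: "Polynomial_Factorial.to_fract = to_fract"
  by (rule ext) (simp add: Defs.to_fract_def Polynomial_Factorial.to_fract_def)

lemma rhom_tf: "rhom (to_fract :: 'a::idom \<Rightarrow> _)"
  by unfold_locales (simp_all add: Defs.to_fract_def One_fract_def)

interpretation tf: rhom "to_fract :: 'a::idom \<Rightarrow> _" by (rule rhom_tf)

lemma tf_eq_iff[simp]: "to_fract x = to_fract y \<longleftrightarrow> x = y"
  using Polynomial_Factorial.to_fract_eq_iff[unfolded tfe] .
lemma tf_eq_0_iff[simp]: "to_fract x = 0 \<longleftrightarrow> x = 0"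
  using Polynomial_Factorial.to_fract_eq_0_iff[unfolded tfe] .
lemmas Fract_conv_tf = Polynomial_Factorial.Fract_conv_to_fract[unfolded tfe]

lemma const_fract_tf: "const_fract c = to_fract [:c:]"
  by (simp add: const_fract_def)

interpretation cf: rhom "const_fract :: 'a::field \<Rightarrow> _"
  by unfold_locales (simp_all add: const_fract_tf flip: tf.hadd tf.hmult tf.hone add: one_pCons)

lemma cf_eq_iff[simp]: "const_fract x = const_fract y \<longleftrightarrow> x = y"
  by (simp add: const_fract_tf)
lemma cf_eq_0_iff[simp]: "const_fract x = 0 \<longleftrightarrow> x = 0"
  by (simp add: const_fract_tf)
lemma cf_divide: "const_fract (x / y) = const_fract x / const_fract y"
proof (cases "y = 0")
  case False
  have "const_fract (x / y) * const_fract y = const_fract x"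
    by (simp flip: cf.hmult add: False)
  then show ?thesis using False by (simp add: field_simps)
qed simp

definition ev :: "'a::field poly \<Rightarrow> 'a poly fract \<Rightarrow> 'a poly fract" where
  "ev a u = poly (map_poly const_fract a) u"

interpretation ev: rhom "\<lambda>a. ev a u"
  unfolding ev_def by (rule cf.rhom_poly)

lemma ev_const[simp]: "ev [:c:] u = const_fract c"
  by (simp add: ev_def)
lemma ev_pCons: "ev (pCons c a) u = const_fract c + u * ev a u"
  by (simp add: ev_def)
lemma ev_X[simp]: "ev [:0,1:] u = u"
  by (simp add: ev_def)

lemma eval2_alt: "eval2 G u v = poly (map_poly (\<lambda>c. ev c u) G) v"
  by (simp add: eval2_def ev_def)

interpretation eval2: rhom "\<lambda>G. eval2 G u v"
  unfolding eval2_alt by (rule rhom.rhom_poly) (rule ev.rhom_axioms)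

lemma eval2_pCons: "eval2 (pCons a G) u v = ev a u + v * eval2 G u v"
  by (simp add: eval2_alt)
lemma eval2_const[simp]: "eval2 [:a:] u v = ev a u"
  by (simp add: eval2_alt)

definition TT :: "'a::field poly fract" where "TT = to_fract [:0,1:]"

lemma ev_TT: "ev a TT = to_fract a"
  by (induction a) (simp_all add: ev_pCons TT_def const_fract_tf flip: tf.hmult tf.hadd add: ev_X)


lemma tf_smult[simp]: "to_fract (smult c p) = to_fract [:c:] * to_fract p"
proof -
  have "smult c p = [:c:] * p" by simp
  thus ?thesis by (metis tf.hmult)
qed

definition num :: "'a::field_gcd poly fract \<Rightarrow> 'a poly" where "num w = fst (quot_of_fract w)"
definition den :: "'a::field_gcd poly fract \<Rightarrow> 'a poly" where "den w = snd (quot_of_fract w)"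
definition rdeg :: "'a::field_gcd poly fract \<Rightarrow> nat" where
  "rdeg w = max (degree (num w)) (degree (den w))"

lemma den_nz[simp]: "den w \<noteq> 0"
  by (simp add: den_def)
lemma w_repr: "w = to_fract (num w) / to_fract (den w)"
  using Fract_quot_of_fract[of w] by (simp add: num_def den_def Fract_conv_tf)
lemma coprime_nd: "coprime (num w) (den w)"
  unfolding num_def den_def by (rule coprime_quot_of_fract)
lemma num_0[simp]: "num 0 = 0"
  by (simp add: num_def)
lemma num_0_iff[simp]: "num w = 0 \<longleftrightarrow> w = 0"
  by (simp add: num_def)

lemma tf_div_eq:
  assumes "q \<noteq> 0" "q' \<noteq> 0"
  shows "to_fract p / to_fract q = to_fract p' / to_fract q' \<longleftrightarrow> p * q' = p' * q"
  using assms by (simp add: field_simps flip: tf.hmult)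

lemma rdeg_le:
  assumes q: "q \<noteq> 0" and w: "w = to_fract p / to_fract q"
  shows "rdeg w \<le> max (degree p) (degree q)"
proof -
  have eq: "p * den w = num w * q"
    using tf_div_eq[of q "den w" p "num w"] q w_repr[of w] w by simp
  have "num w dvd p * den w" using eq by simp
  hence d1: "num w dvd p" using coprime_nd[of w] by (simp add: coprime_dvd_mult_left_iff)
  have "den w dvd num w * q" using eq by (metis dvd_triv_right)
  hence d2: "den w dvd q" using coprime_nd[of w]
    by (simp add: coprime_dvd_mult_right_iff coprime_commute)
  have "degree (num w) \<le> degree p"
  proof (cases "p = 0")
    case True
    hence "w = 0" using w by simp
    thus ?thesis by simp
  next
    case False
    thus ?thesis using d1 by (rule_tac dvd_imp_degree_le) auto
  qed
  moreover have "degree (den w) \<le> degree q" using d2 q by (rule dvd_imp_degree_le)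
  ultimately show ?thesis unfolding rdeg_def by (simp add: max.coboundedI1 max.coboundedI2)
qed

lemma tf_const_div: "to_fract [:a:] / to_fract [:b:] = const_fract (a / b)"
  by (metis cf_divide const_fract_tf)

lemma rdeg_0_iff: "rdeg w = 0 \<longleftrightarrow> w \<in> range const_fract"
proof
  assume "rdeg w = 0"
  hence "degree (num w) = 0" "degree (den w) = 0" by (auto simp: rdeg_def)
  hence "num w = [:coeff (num w) 0:]" "den w = [:coeff (den w) 0:]"
    by (metis degree_0_id)+
  hence "w = const_fract (coeff (num w) 0 / coeff (den w) 0)"
    using w_repr[of w] tf_const_div by metis
  thus "w \<in> range const_fract" by blast
next
  assume "w \<in> range const_fract"
  then obtain c where "w = to_fract [:c:] / to_fract 1" by (auto simp: const_fract_tf)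
  from rdeg_le[OF _ this] show "rdeg w = 0" by simp
qed

lemma rdeg_TT: "rdeg (TT :: 'a::field_gcd poly fract) = 1"
proof -
  have "rdeg (TT :: 'a poly fract) \<le> 1"
    using rdeg_le[of 1 TT "[:0,1:]"] by (simp add: TT_def)
  moreover have "(TT :: 'a poly fract) \<notin> range const_fract"
    by (auto simp: TT_def const_fract_tf)
  ultimately show ?thesis using rdeg_0_iff[of "TT :: 'a poly fract"] by linarith
qed

section \<open>transcendence of nonconstant elements\<close>

lemma horner:
  fixes g h :: "'a::field poly"
  assumes h: "h \<noteq> 0" and u: "u = to_fract g / to_fract h"
  shows "\<exists>N. to_fract h ^ degree a * ev a u = to_fract N \<and>
             h dvd (N - smult (lead_coeff a) (g ^ degree a))"
proof (induction a)
  case 0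
  show ?case by (rule exI[of _ 0]) simp
next
  case (pCons c a)
  show ?case
  proof (cases "a = 0")
    case True
    thus ?thesis by (intro exI[of _ "[:c:]"]) (simp add: const_fract_tf)
  next
    case False
    from pCons.IH obtain N where N: "to_fract h ^ degree a * ev a u = to_fract N"
      "h dvd (N - smult (lead_coeff a) (g ^ degree a))" by blast
    have hu: "to_fract h * u = to_fract g" using h u by simp
    let ?N = "smult c (h ^ Suc (degree a)) + g * N"
    have "to_fract h ^ degree (pCons c a) * ev (pCons c a) u =
          to_fract h ^ Suc (degree a) * const_fract c + (to_fract h * u) * (to_fract h ^ degree a * ev a u)"
      using False by (simp add: ev_pCons algebra_simps)
    also have "\<dots> = to_fract ?N"
      using hu N(1) by (simp add: const_fract_tf algebra_simps)
    finally have e1: "to_fract h ^ degree (pCons c a) * ev (pCons c a) u = to_fract ?N" .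
    have "?N - smult (lead_coeff (pCons c a)) (g ^ degree (pCons c a)) =
          smult c (h ^ Suc (degree a)) + g * (N - smult (lead_coeff a) (g ^ degree a))"
      using False by (simp add: algebra_simps)
    moreover have "h dvd \<dots>"
    proof (rule dvd_add)
      show "h dvd smult c (h ^ Suc (degree a))" by (intro dvd_smult) simp
      show "h dvd g * (N - smult (lead_coeff a) (g ^ degree a))" using N(2) by simp
    qed
    ultimately have "h dvd ?N - smult (lead_coeff (pCons c a)) (g ^ degree (pCons c a))" by metis
    thus ?thesis using e1 by blast
  qed
qed

lemma ev_tf: "ev a (to_fract g) = to_fract (pcompose a g)"
  by (induction a) (simp_all add: ev_pCons pcompose_pCons const_fract_tf)

lemma ev_nz:
  fixes u :: "'a::field_gcd poly fract"
  assumes u: "u \<notin> range const_fract" and a: "a \<noteq> 0"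
  shows "ev a u \<noteq> 0"
proof
  assume ev0: "ev a u = 0"
  define g h where "g = num u" and "h = den u"
  have h: "h \<noteq> 0" and uu: "u = to_fract g / to_fract h" and cop: "coprime h g"
    using w_repr[of u] coprime_nd[of u] by (auto simp: g_def h_def coprime_commute)
  have rd: "rdeg u \<noteq> 0" using u rdeg_0_iff by blast
  show False
  proof (cases "degree a = 0")
    case True
    then obtain c where "a = [:c:]" by (metis degree_0_id)
    thus False using ev0 a by simp
  next
    case False
    from horner[OF h uu, of a] obtain N where
      N: "to_fract h ^ degree a * ev a u = to_fract N" "h dvd (N - smult (lead_coeff a) (g ^ degree a))"
      by blast
    have "N = 0" using N(1) ev0 by simp
    hence A: "h dvd [:lead_coeff a:] * g ^ degree a" using N(2) by simp
    have B: "coprime h (g ^ degree a)" using cop by simp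
    from A B have "h dvd [:lead_coeff a:]" by (metis coprime_dvd_mult_left_iff)
    moreover have "is_unit [:lead_coeff a:]" using a by (simp add: is_unit_const_poly_iff dvd_field_iff)
    ultimately have hu: "is_unit h" by (rule dvd_unit_imp_unit)
    hence dh: "degree h = 0" by (simp add: is_unit_iff_degree h)
    then obtain h0 where h0: "h = [:h0:]" by (metis degree_0_id)
    with h have h0nz: "h0 \<noteq> 0" by simp
    define g' where "g' = smult (inverse h0) g"
    have "g' * h = g" unfolding g'_def h0 using h0nz by simp
    hence "to_fract g' * to_fract h = to_fract g" by (metis tf.hmult)
    hence "u * to_fract h = to_fract g' * to_fract h" using uu h by simp
    hence ug: "u = to_fract g'" using h by simp
    have "degree g' = degree g" using h0nz by (simp add: g'_def)
    moreover have "degree g \<noteq> 0" using rd dh by (simp add: rdeg_def g_def h_def)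
    ultimately have "degree (pcompose a g') \<noteq> 0" using False by (simp add: degree_pcompose)
    hence "pcompose a g' \<noteq> 0" by auto
    thus False using ev0 ug ev_tf[of a g'] by simp
  qed
qed

section \<open>the embedding k(X) \<rightarrow> k(T), X \<mapsto> u\<close>

definition phi :: "'a::field_gcd poly fract \<Rightarrow> 'a poly fract \<Rightarrow> 'a poly fract" where
  "phi u w = ev (num w) u / ev (den w) u"

context
  fixes u :: "'a::field_gcd poly fract"
  assumes u: "u \<notin> range const_fract"
begin

lemma ev_nz': "a \<noteq> 0 \<Longrightarrow> ev a u \<noteq> 0" using ev_nz[OF u] .

lemma phi_frac:
  assumes q: "q \<noteq> 0"
  shows "phi u (to_fract p / to_fract q) = ev p u / ev q u"
proof -
  define w where "w = to_fract p / to_fract q"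
  have "p * den w = num w * q"
    using tf_div_eq[of q "den w" p "num w"] q w_repr[of w] by (simp add: w_def)
  hence "ev p u * ev (den w) u = ev (num w) u * ev q u"
    by (metis ev.hmult)
  thus ?thesis using ev_nz'[OF q] ev_nz'[OF den_nz[of w]]
    by (simp add: phi_def w_def[symmetric] field_simps)
qed

lemma phi_tf[simp]: "phi u (to_fract p) = ev p u"
  using phi_frac[of 1 p] by simp

lemma rhom_phi: "rhom (phi u)"
proof
  fix x y :: "'a poly fract"
  define a where "a = num x"
  define b where "b = den x"
  define c where "c = num y"
  define d where "d = den y"
  have x: "x = to_fract a / to_fract b" and y: "y = to_fract c / to_fract d"
    and b: "b \<noteq> 0" and d: "d \<noteq> 0"
    using w_repr[of x] w_repr[of y] by (auto simp: a_def b_def c_def d_def)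
  have eb: "ev b u \<noteq> 0" and ed: "ev d u \<noteq> 0" using ev_nz' b d by auto
  have px: "phi u x = ev a u / ev b u" unfolding x by (rule phi_frac[OF b])
  have py: "phi u y = ev c u / ev d u" unfolding y by (rule phi_frac[OF d])
  have xy: "x + y = to_fract (a * d + c * b) / to_fract (b * d)"
    using x y b d by (simp add: field_simps)
  have "phi u (x + y) = ev (a * d + c * b) u / ev (b * d) u"
    unfolding xy using b d by (intro phi_frac) simp
  also have "\<dots> = phi u x + phi u y"
    using px py eb ed by (simp add: field_simps)
  finally show "phi u (x + y) = phi u x + phi u y" .
  have xy2: "x * y = to_fract (a * c) / to_fract (b * d)"
    using x y b d by (simp add: field_simps)
  have "phi u (x * y) = ev (a * c) u / ev (b * d) u"
    unfolding xy2 using b d by (intro phi_frac) simp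
  also have "\<dots> = phi u x * phi u y"
    using px py eb ed by (simp add: field_simps)
  finally show "phi u (x * y) = phi u x * phi u y" .
next
  show "phi u 1 = 1" using phi_tf[of 1] by simp
qed

interpretation ph: rhom "phi u" by (rule rhom_phi)

lemma phi_eq_0_iff[simp]: "phi u x = 0 \<longleftrightarrow> x = 0"
proof
  assume "phi u x = 0"
  hence "ev (num x) u = 0" using ev_nz'[OF den_nz[of x]] by (simp add: phi_def)
  thus "x = 0" using ev_nz'[of "num x"] by auto
qed simp

lemma phi_inj[simp]: "phi u x = phi u y \<longleftrightarrow> x = y"
  using phi_eq_0_iff[of "x - y"] by (simp del: phi_eq_0_iff)

lemma phi_divide: "phi u (x / y) = phi u x / phi u y"
proof (cases "y = 0")
  case False
  have "phi u (x / y) * phi u y = phi u x" using False by (simp flip: ph.hmult)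
  thus ?thesis using False by (simp add: field_simps)
qed simp

lemma phi_const[simp]: "phi u (const_fract c) = const_fract c"
  by (simp add: const_fract_tf)

lemma phi_TT[simp]: "phi u TT = u"
  by (simp add: TT_def)

end

section \<open>swapping the two variables\<close>

interpretation cp: rhom "\<lambda>c::'a::comm_ring_1. [:c:]"
  by unfold_locales (simp_all add: one_pCons)

declare cp.hadd[simp del] cp.hmult[simp del] cp.huminus[simp del] cp.hdiff[simp del]
  cp.hpower[simp del] cp.hone[simp del]

definition sw :: "'a::comm_ring_1 poly poly \<Rightarrow> 'a poly poly" where
  "sw G = poly (map_poly (map_poly (\<lambda>c. [:c:])) G) [:[:0,1:]:]"

interpretation sw: rhom sw
  unfolding sw_def by (rule rhom.rhom_poly, rule cp.rhom_map)

interpretation mcp: rhom "map_poly (\<lambda>c::'a::comm_ring_1. [:c:])" by (rule cp.rhom_map)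

lemma sw_pCons: "sw (pCons a G) = map_poly (\<lambda>c. [:c:]) a + [:[:0,1:]:] * sw G"
  by (simp add: sw_def mcp.map_pCons)

lemma coeff_sw: "coeff (coeff (sw G) j) i = coeff (coeff G i) j"
proof (induction G arbitrary: i)
  case 0
  then show ?case by (simp add: sw_def)
next
  case (pCons a G)
  have m: "[:0,1:] * q = pCons 0 q" for q :: "'a poly" by simp
  show ?case
    by (cases i) (simp_all add: sw_pCons coeff_map_poly m pCons.IH)
qed

lemma sw_sw[simp]: "sw (sw G) = G"
  by (intro poly_eqI) (simp add: coeff_sw)

lemma sw_inj[simp]: "sw G = sw H \<longleftrightarrow> G = H"
  by (metis sw_sw)

lemma sw_eq_0_iff[simp]: "sw G = 0 \<longleftrightarrow> G = 0"
  using sw_inj[of G 0] by simp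

lemma degree_coeff_sw: "degree (coeff (sw G) j) \<le> degree G"
  by (rule degree_le) (simp add: coeff_sw coeff_eq_0)

lemma degree_sw: "degree (sw G) = degX G"
proof -
  let ?D = "degX G"
  have fin: "finite ((\<lambda>i. degree (coeff G i)) ` {..degree G})" by simp
  have ge: "degree (coeff G i) \<le> ?D" for i
  proof (cases "i \<le> degree G")
    case True
    thus ?thesis unfolding degX_def by (intro Max_ge[OF fin]) auto
  next
    case False
    thus ?thesis by (simp add: coeff_eq_0)
  qed
  have "degree (sw G) \<le> ?D"
  proof (rule degree_le, intro allI impI)
    fix j assume j: "?D < j"
    show "coeff (sw G) j = 0"
    proof (rule poly_eqI)
      fix i
      have "degree (coeff G i) < j" using ge[of i] j by linarith
      thus "coeff (coeff (sw G) j) i = coeff 0 i" by (simp add: coeff_sw coeff_eq_0)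
    qed
  qed
  moreover have "?D \<le> degree (sw G)"
  proof -
    have "?D \<in> (\<lambda>i. degree (coeff G i)) ` {..degree G}"
      unfolding degX_def by (rule Max_in[OF fin]) auto
    then obtain i0 where i0: "?D = degree (coeff G i0)" by auto
    show ?thesis
    proof (cases "?D = 0")
      case False
      hence "coeff G i0 \<noteq> 0" using i0 by auto
      hence "coeff (coeff G i0) ?D \<noteq> 0" using i0 by simp
      hence "coeff (coeff (sw G) ?D) i0 \<noteq> 0" by (simp add: coeff_sw)
      hence "coeff (sw G) ?D \<noteq> 0" by auto
      thus ?thesis by (rule le_degree)
    qed simp
  qed
  ultimately show ?thesis by simp
qed

lemma sw_const_poly: "sw (map_poly (\<lambda>c. [:c:]) e) = [:e:]"
  by (intro poly_eqI) (simp add: coeff_sw coeff_map_poly coeff_pCons split: nat.split)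

lemma sw_degree0:
  assumes "degree (sw N) = 0"
  shows "N = map_poly (\<lambda>c. [:c:]) (coeff (sw N) 0)"
proof -
  have "sw N = [:coeff (sw N) 0:]" using assms by (metis degree_0_id)
  hence "sw N = sw (map_poly (\<lambda>c. [:c:]) (coeff (sw N) 0))" by (simp add: sw_const_poly)
  thus ?thesis by simp
qed

lemma degree_sw_mult:
  fixes G H :: "'a::idom poly poly"
  assumes "G \<noteq> 0" "H \<noteq> 0"
  shows "degree (sw (G * H)) = degree (sw G) + degree (sw H)"
  using assms by (simp add: degree_mult_eq)

lemma eval2_cpoly: "eval2 (map_poly (\<lambda>c. [:c:]) a) v u = ev a u"
proof -
  have "map_poly (\<lambda>c. ev c v) (map_poly (\<lambda>c. [:c:]) a) = map_poly const_fract a"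
    by (subst map_poly_map_poly) (simp_all add: o_def)
  thus ?thesis by (simp add: eval2_alt ev_def)
qed

lemma ev_X'[simp]: "ev (pCons 0 1) u = u"
  by (simp add: ev_def)

lemma eval2_smult[simp]: "eval2 (smult a G) u v = ev a u * eval2 G u v"
proof -
  have "smult a G = [:a:] * G" by simp
  thus ?thesis by (metis eval2.hmult eval2_const)
qed

lemma eval2_sw: "eval2 (sw G) v u = eval2 G u v"
proof (induction G)
  case 0
  then show ?case by simp
next
  case (pCons a G)
  show ?case by (simp add: sw_pCons eval2_cpoly pCons.IH eval2_pCons)
qed


lemma bezout_ex: "\<exists>s t. s * a + t * b = gcd a (b :: 'a :: euclidean_ring_gcd)"
  using bezout_coefficients_fst_snd by blast

lemmas fract_poly_dvdD' = fract_poly_dvdD[unfolded tfe]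
lemmas content_decompose_fract' = content_decompose_fract[unfolded tfe]

lemma ev_TT_poly: "poly (map_poly const_fract g) TT = to_fract g"
  using ev_TT[of g] by (simp add: ev_def)

lemma unit_const_poly_field:
  fixes e :: "'a::field poly"
  assumes "is_unit e" shows "\<exists>e0. e = [:e0:] \<and> e0 \<noteq> 0"
  using assms by (auto simp: is_unit_poly_iff dvd_field_iff)

definition Q0 :: "'a::comm_ring_1 poly \<Rightarrow> 'a poly \<Rightarrow> 'a poly poly" where
  "Q0 g h = map_poly (\<lambda>c. [:c:]) g - smult [:0,1:] (map_poly (\<lambda>c. [:c:]) h)"

lemma coeff_Q0: "coeff (Q0 g h) i = [:coeff g i, - coeff h i:]"
  by (simp add: Q0_def coeff_map_poly)

lemma sw_Q0: "sw (Q0 g h) = [:g, -h:]"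
  by (intro poly_eqI) (simp add: coeff_sw coeff_Q0 coeff_pCons split: nat.split)

lemma degree_Q0:
  assumes "h \<noteq> 0"
  shows "degree (Q0 g h) = max (degree g) (degree h)"
proof -
  let ?r = "max (degree g) (degree h)"
  have le: "degree (Q0 g h) \<le> ?r"
    by (rule degree_le) (auto simp: coeff_Q0 coeff_eq_0)
  have "coeff g ?r \<noteq> 0 \<or> coeff h ?r \<noteq> 0"
  proof (cases "degree h \<le> degree g")
    case True
    show ?thesis
    proof (cases "g = 0")
      case True
      hence "?r = degree h" by simp
      thus ?thesis using assms by simp
    next
      case False
      hence "coeff g (degree g) \<noteq> 0" by simp
      moreover have "?r = degree g" using True by simp
      ultimately show ?thesis by simp
    qed
  next
    case False
    hence "?r = degree h" by simp
    thus ?thesis using assms by simp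
  qed
  hence "coeff (Q0 g h) ?r \<noteq> 0" by (simp add: coeff_Q0)
  hence "?r \<le> degree (Q0 g h)" by (rule le_degree)
  with le show ?thesis by linarith
qed

lemma degree_sw_Q0: "h \<noteq> 0 \<Longrightarrow> degree (sw (Q0 g h)) = 1"
  by (simp add: sw_Q0)

lemma Q0_nz: assumes "h \<noteq> 0" shows "Q0 g h \<noteq> 0"
proof
  assume "Q0 g h = 0"
  hence "sw (Q0 g h) = 0" by simp
  hence "[:g, -h:] = 0" by (simp only: sw_Q0)
  thus False using assms by simp
qed

lemma Q0_factor_unit:
  fixes g h :: "'a::field_gcd poly"
  assumes cop: "coprime g h" and fac: "Q0 g h = A * B" and d: "degree (sw A) = 0"
  shows "is_unit (coeff (sw A) 0)"
proof -
  define e where "e = coeff (sw A) 0"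
  have "sw A = [:e:]" unfolding e_def using d by (metis degree_0_id)
  hence "sw (Q0 g h) = [:e:] * sw B" using fac by (simp only: sw.hmult)
  hence eq: "[:g, -h:] = smult e (sw B)" by (simp add: sw_Q0)
  have "coeff [:g, -h:] 0 = coeff (smult e (sw B)) 0" "coeff [:g, -h:] 1 = coeff (smult e (sw B)) 1"
    using eq by simp_all
  hence "g = e * coeff (sw B) 0" "h = e * (- coeff (sw B) 1)" by (simp_all, metis add.inverse_inverse)
  hence "e dvd g" "e dvd h" by (auto intro: dvdI)
  thus ?thesis unfolding e_def using cop by (metis coprime_common_divisor)
qed


section \<open>The minimal polynomial of T over k(u) has degree rdeg u\<close>

lemma map_phi_tf:
  assumes u: "u \<notin> range const_fract"
  shows "map_poly (phi u) (map_poly to_fract Q) = map_poly (\<lambda>c. ev c u) Q"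
  using rhom.hzero[OF rhom_phi[OF u]]
  by (subst map_poly_map_poly) (simp_all add: o_def phi_tf[OF u])

lemma map_ev_cpoly: "map_poly (\<lambda>c. ev c u) (map_poly (\<lambda>c. [:c:]) g) = map_poly const_fract g"
  by (subst map_poly_map_poly) (simp_all add: o_def)

lemma phi_Q0:
  assumes u: "u \<notin> range const_fract"
  shows "map_poly (phi u) (map_poly to_fract (Q0 g h)) =
         map_poly const_fract g - smult u (map_poly const_fract h)"
proof -
  interpret evm: rhom "map_poly (\<lambda>c. ev c u)" by (rule ev.rhom_map)
  show ?thesis unfolding map_phi_tf[OF u] Q0_def
    by (simp add: map_ev_cpoly)
qed

lemma phi_Q0_root:
  assumes u: "u \<notin> range const_fract"
  shows "poly (map_poly (phi u) (map_poly to_fract (Q0 (num u) (den u)))) TT = 0"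
proof -
  have "poly (map_poly (phi u) (map_poly to_fract (Q0 (num u) (den u)))) TT =
        to_fract (num u) - u * to_fract (den u)"
    by (simp add: phi_Q0[OF u] ev_TT_poly)
  also have "\<dots> = 0"
  proof -
    have b: "to_fract (den u) \<noteq> 0" by simp
    have "u * to_fract (den u) = to_fract (num u)"
      using w_repr[of u] b by (metis nonzero_eq_divide_eq)
    thus ?thesis by simp
  qed
  finally show ?thesis .
qed

lemma rdeg_num_den: "rdeg u = max (degree (num u)) (degree (den u))"
  by (simp add: rdeg_def)

lemma irr:
  fixes u :: "'a::field_gcd poly fract"
  assumes u: "u \<notin> range const_fract" and C: "C \<noteq> 0"
    and root: "poly (map_poly (phi u) C) TT = 0"
  shows "rdeg u \<le> degree C"
proof -
  interpret ph: rhom "phi u" by (rule rhom_phi[OF u])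
  define g h where "g = num u" and "h = den u"
  have h: "h \<noteq> 0" and cop: "coprime g h" using coprime_nd[of u] by (auto simp: g_def h_def)
  define P0 where "P0 = map_poly to_fract (Q0 g h)"
  have P0root: "poly (map_poly (phi u) P0) TT = 0"
    unfolding P0_def g_def h_def by (rule phi_Q0_root[OF u])
  define D where "D = gcd C P0"
  have DC: "D dvd C" and DP: "D dvd P0" by (simp_all add: D_def)
  have Dnz: "D \<noteq> 0" using C by (simp add: D_def)
  obtain s t where st: "s * C + t * P0 = D" using bezout_ex[of C P0] by (auto simp: D_def)
  have Droot: "poly (map_poly (phi u) D) TT = 0"
    using arg_cong[OF st, of "\<lambda>p. poly (map_poly (phi u) p) TT"] root P0root
    by (simp add: poly_mult)
  obtain c D0 where cD0: "D = smult c (map_poly to_fract D0)" "content D0 = 1"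
    using content_decompose_fract'[of D] by blast
  have c: "c \<noteq> 0" using Dnz cD0(1) by auto
  have "map_poly to_fract D0 dvd P0" using DP cD0(1) c by (simp add: smult_dvd_iff)
  hence "D0 dvd Q0 g h" unfolding P0_def using cD0(2) by (rule fract_poly_dvdD')
  then obtain E0 where QDE: "Q0 g h = D0 * E0" by (elim dvdE)
  have Q0nz: "Q0 g h \<noteq> 0" using Q0_nz[OF h] .
  hence D0nz: "D0 \<noteq> 0" and E0nz: "E0 \<noteq> 0" using QDE by auto
  have "degree (sw D0) + degree (sw E0) = 1"
    using degree_sw_Q0[OF h, of g] QDE degree_sw_mult[OF D0nz E0nz] by simp
  hence "degree (sw D0) = 0 \<or> degree (sw E0) = 0" by linarith
  thus ?thesis
  proof
    assume d0: "degree (sw D0) = 0"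
    have "is_unit (coeff (sw D0) 0)" by (rule Q0_factor_unit[OF cop QDE d0])
    then obtain e0 where e0: "coeff (sw D0) 0 = [:e0:]" "e0 \<noteq> 0"
      using unit_const_poly_field by blast
    have "D0 = [:[:e0:]:]" using sw_degree0[OF d0] e0(1) by simp
    hence "D = [:c * to_fract [:e0:]:]" using cD0(1) by simp
    hence "poly (map_poly (phi u) D) TT = phi u (c * to_fract [:e0:])" by simp
    also have "\<dots> \<noteq> 0" using c e0(2) phi_eq_0_iff[OF u] by simp
    finally show ?thesis using Droot by simp
  next
    assume d0: "degree (sw E0) = 0"
    have QED: "Q0 g h = E0 * D0" using QDE by (simp add: mult.commute)
    have "is_unit (coeff (sw E0) 0)" by (rule Q0_factor_unit[OF cop QED d0])
    then obtain e0 where e0: "coeff (sw E0) 0 = [:e0:]" "e0 \<noteq> 0"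
      using unit_const_poly_field by blast
    have "E0 = [:[:e0:]:]" using sw_degree0[OF d0] e0(1) by simp
    hence "degree (Q0 g h) = degree D0" using QDE e0(2) by simp
    also have "degree D0 = degree D" using cD0(1) c by (simp add: degree_map_poly)
    also have "degree D \<le> degree C" using DC C by (rule dvd_imp_degree_le)
    finally show ?thesis using degree_Q0[OF h, of g] by (simp add: rdeg_def g_def h_def)
  qed
qed


lemma eval2_phi:
  assumes u: "u \<notin> range const_fract"
  shows "eval2 G u v = poly (map_poly (phi u) (map_poly to_fract G)) v"
  by (simp add: map_phi_tf[OF u] eval2_alt)

lemma TT_power_inj: "(TT::'a::field_gcd poly fract) ^ i = TT ^ j \<longleftrightarrow> i = j"
proof
  assume "(TT::'a poly fract) ^ i = TT ^ j"
  hence "to_fract ([:0,1::'a:] ^ i) = to_fract ([:0,1:] ^ j)" by (simp add: TT_def)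
  hence "([:0,1::'a:] ^ i) = [:0,1:] ^ j" by (metis tf.hpower tf_eq_iff)
  hence "degree ([:0,1::'a:] ^ i) = degree ([:0,1::'a:] ^ j)" by simp
  thus "i = j" by (simp add: degree_power_eq)
qed simp

lemma map_sum_monom:
  assumes "rhom f"
  shows "map_poly f (\<Sum>i<n. monom (c i) i) = (\<Sum>i<n. monom (f (c i)) i)"
proof -
  interpret f: rhom f by fact
  show ?thesis by (intro poly_eqI) (simp add: coeff_map_poly coeff_sum f.hsum)
qed

lemma coeff_sum_monom: "j < n \<Longrightarrow> coeff (\<Sum>i<n. monom (c i) i) j = c j"
  by (simp add: coeff_sum)

lemma bound:
  fixes u v :: "'a::field_gcd poly fract"
  assumes u: "u \<notin> range const_fract" and P: "P \<noteq> 0" and Pv: "eval2 P u v = 0"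
    and Hnz: "eval2 H u v \<noteq> 0" and gen: "TT = eval2 G u v / eval2 H u v"
  shows "rdeg u \<le> degree P"
proof -
  interpret ph: rhom "phi u" by (rule rhom_phi[OF u])
  interpret vs: vector_space "\<lambda>c w. phi u c * w"
    by unfold_locales (simp_all add: algebra_simps)
  define evv where "evv p = poly (map_poly (phi u) p) v" for p
  interpret evv: rhom evv unfolding evv_def by (rule ph.rhom_poly)
  define P' where "P' = map_poly to_fract P"
  have P'nz: "P' \<noteq> 0" using P by (simp add: P'_def map_poly_eq_0_iff)
  have dP': "degree P' = degree P" by (simp add: P'_def degree_map_poly)
  have P'v: "evv P' = 0" using Pv by (simp add: evv_def P'_def eval2_phi[OF u])
  define m where "m = degree P"
  define B where "B = (\<lambda>i. v ^ i) ` {..<m}"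
  have finB: "finite B" and cardB: "card B \<le> m"
    unfolding B_def by (auto intro: card_image_le[THEN order.trans])
  have low: "evv q \<in> vs.span B" if "q = 0 \<or> degree q < m" for q
  proof (cases "q = 0")
    case True thus ?thesis by (simp add: vs.span_zero)
  next
    case False
    hence dq: "degree q < m" using that by simp
    have "evv q = (\<Sum>i\<le>degree q. phi u (coeff q i) * v ^ i)"
      unfolding evv_def using phi_eq_0_iff[OF u]
      by (simp add: poly_altdef coeff_map_poly degree_map_poly)
    also have "\<dots> \<in> vs.span B"
    proof (rule vs.span_sum)
      fix i assume "i \<in> {..degree q}"
      hence "v ^ i \<in> B" using dq unfolding B_def by auto
      thus "phi u (coeff q i) * v ^ i \<in> vs.span B" by (intro vs.span_scale vs.span_base)
    qed
    finally show ?thesis .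
  qed
  have all: "evv p \<in> vs.span B" for p
  proof -
    have "p = (p div P') * P' + p mod P'" by simp
    hence "evv p = evv (p mod P')" using P'v by (metis evv.hadd evv.hmult mult_zero_right add_0)
    moreover have "p mod P' = 0 \<or> degree (p mod P') < m"
      using degree_mod_less[OF P'nz, of p] dP' by (simp add: m_def)
    ultimately show ?thesis using low by simp
  qed
  define Gv Hv where "Gv = eval2 G u v" and "Hv = eval2 H u v"
  have Gv: "Gv = evv (map_poly to_fract G)" and Hv: "Hv = evv (map_poly to_fract H)"
    by (simp_all add: Gv_def Hv_def evv_def eval2_phi[OF u])
  have Hvnz: "Hv \<noteq> 0" using Hnz by (simp add: Hv_def)
  have GT: "Gv = TT * Hv" using gen Hvnz unfolding Gv_def Hv_def by (simp add: nonzero_eq_divide_eq)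
  define n where "n = rdeg u"
  define e where "e i = Gv ^ i * Hv ^ (n - 1 - i)" for i
  have e_alt: "e i = TT ^ i * Hv ^ (n - 1)" if "i < n" for i
  proof -
    have "e i = TT ^ i * (Hv ^ i * Hv ^ (n - 1 - i))" by (simp add: e_def GT power_mult_distrib)
    also have "Hv ^ i * Hv ^ (n - 1 - i) = Hv ^ (n - 1)"
      using that by (simp flip: power_add)
    finally show ?thesis .
  qed
  define S where "S = e ` {..<n}"
  have inj: "inj_on e {..<n}"
  proof (rule inj_onI)
    fix i j assume "i \<in> {..<n}" "j \<in> {..<n}" "e i = e j"
    hence "TT ^ i * Hv ^ (n - 1) = TT ^ j * Hv ^ (n - 1)" by (simp add: e_alt)
    hence "(TT :: 'a poly fract) ^ i = TT ^ j" using Hvnz by simp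
    thus "i = j" by (simp add: TT_power_inj)
  qed
  have cardS: "card S = n" unfolding S_def using card_image[OF inj] by simp
  have Sspan: "S \<subseteq> vs.span B"
  proof
    fix x assume "x \<in> S"
    then obtain i where "x = e i" unfolding S_def by auto
    hence "x = evv (map_poly to_fract G ^ i * map_poly to_fract H ^ (n - 1 - i))"
      by (simp add: e_def Gv Hv)
    thus "x \<in> vs.span B" using all by (simp del: evv.hmult evv.hpower)
  qed
  have indep: "vs.independent S"
  proof (rule vs.independent_if_scalars_zero)
    show "finite S" by (simp add: S_def)
    fix f x assume sum0: "(\<Sum>x\<in>S. phi u (f x) * x) = 0" and x: "x \<in> S"
    define c where "c i = f (e i)" for i
    define C where "C = (\<Sum>i<n. monom (c i) i)"
    have "(\<Sum>i<n. phi u (c i) * e i) = 0"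
      using sum0 unfolding S_def c_def by (simp add: sum.reindex[OF inj])
    moreover have "(\<Sum>i<n. phi u (c i) * e i) = (\<Sum>i<n. phi u (c i) * TT ^ i * Hv ^ (n - 1))"
      by (rule sum.cong) (simp_all add: e_alt)
    moreover have "\<dots> = (\<Sum>i<n. phi u (c i) * TT ^ i) * Hv ^ (n - 1)"
      by (simp add: sum_distrib_right)
    ultimately have "(\<Sum>i<n. phi u (c i) * TT ^ i) * Hv ^ (n - 1) = 0" by simp
    hence s0: "(\<Sum>i<n. phi u (c i) * TT ^ i) = 0" using Hvnz by simp
    have "poly (map_poly (phi u) C) TT = (\<Sum>i<n. phi u (c i) * TT ^ i)"
      unfolding C_def map_sum_monom[OF rhom_phi[OF u]]
      by (simp add: poly_sum poly_monom)
    hence root: "poly (map_poly (phi u) C) TT = 0" using s0 by simp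
    have C0: "C = 0"
    proof (rule ccontr)
      assume "C \<noteq> 0"
      from irr[OF u this root] have "n \<le> degree C" by (simp add: n_def)
      moreover have "degree C < n" if "n > 0"
      proof -
        have "degree C \<le> n - 1" unfolding C_def
          by (intro degree_sum_le) (auto intro!: order.trans[OF degree_monom_le])
        thus ?thesis using that by linarith
      qed
      ultimately show False using \<open>C \<noteq> 0\<close> by (cases "n = 0") (auto simp: C_def)
    qed
    from x obtain i where i: "i < n" "x = e i" unfolding S_def by auto
    have "c i = coeff C i" unfolding C_def using coeff_sum_monom[OF i(1), of c] by simp
    thus "f x = 0" using C0 i by (simp add: c_def)
  qed
  have "card S \<le> card B" using vs.independent_span_bound[OF finB indep Sspan] by simp
  thus ?thesis using cardS cardB by (simp add: n_def m_def)
qed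


section \<open>the kernel of evaluation at a nonconstant point is (F)\<close>

lemma clear_denoms:
  fixes p :: "'a::field_gcd poly fract poly"
  shows "\<exists>d p0. d \<noteq> 0 \<and> smult (to_fract d) p = map_poly to_fract p0"
proof -
  obtain c p1 where cp: "p = smult c (map_poly to_fract p1)"
    using content_decompose_fract'[of p] by blast
  have "c = to_fract (num c) / to_fract (den c)" by (rule w_repr)
  hence "smult (to_fract (den c)) p = smult (to_fract (num c)) (map_poly to_fract p1)"
    using cp by (simp add: field_simps)
  also have "\<dots> = map_poly to_fract (smult (num c) p1)" by (simp add: tf.map_smult)
  finally show ?thesis using den_nz by blast
qed

lemma sw_unit: "is_unit (sw A) \<longleftrightarrow> is_unit A"
proof
  assume "is_unit (sw A)"
  then obtain B where "1 = sw A * B" by (elim dvdE)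
  hence "sw 1 = sw (sw (sw A * B))" by simp
  hence "1 = A * sw B" by (metis sw.hmult sw_sw sw.hone)
  thus "is_unit A" by (rule dvdI)
next
  assume "is_unit A"
  then obtain B where "1 = A * B" by (elim dvdE)
  hence "sw 1 = sw A * sw B" by (metis sw.hmult)
  thus "is_unit (sw A)" by (metis dvdI sw.hone)
qed

lemma sw_dvd: "sw A dvd sw B \<longleftrightarrow> A dvd B"
proof
  assume "sw A dvd sw B"
  then obtain C where "sw B = sw A * C" by (elim dvdE)
  hence "sw (sw B) = sw (sw A * C)" by simp
  hence "B = A * sw C" by (simp only: sw.hmult sw_sw)
  thus "A dvd B" by (rule dvdI)
next
  assume "A dvd B"
  then obtain C where "B = A * C" by (elim dvdE)
  thus "sw A dvd sw B" by (simp add: sw.hmult)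
qed

lemma sw_irreducible: "irreducible (sw F) \<longleftrightarrow> irreducible (F :: 'a::field poly poly)"
proof -
  have *: "irreducible (sw F)" if "irreducible F" for F :: "'b::field poly poly"
  proof (rule irreducibleI)
    show "sw F \<noteq> 0" using that by auto
    show "\<not> is_unit (sw F)" using that by (simp add: sw_unit irreducible_def)
    fix a b assume "sw F = a * b"
    hence "F = sw a * sw b" by (metis sw.hmult sw_sw)
    hence "is_unit (sw a) \<or> is_unit (sw b)" using that by (metis irreducibleD)
    thus "is_unit a \<or> is_unit b" by (simp add: sw_unit)
  qed
  show ?thesis using *[of F] *[of "sw F"] by auto
qed

lemma unit_pp:
  fixes D0 :: "'a::field poly poly"
  assumes "is_unit D0" shows "\<exists>d. D0 = [:[:d:]:] \<and> d \<noteq> 0"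
proof -
  obtain e where e: "D0 = [:e:]" "is_unit e" using assms by (auto simp: is_unit_poly_iff)
  then obtain d where "e = [:d:]" "d \<noteq> 0" using unit_const_poly_field by blast
  thus ?thesis using e by blast
qed

lemma kernel_aux:
  fixes F G :: "'a::field_gcd poly poly"
  assumes irr: "irreducible F" and u: "u \<notin> range const_fract"
    and Fuv: "eval2 F u v = 0" and Guv: "eval2 G u v = 0"
  shows "F dvd G"
proof (rule ccontr)
  assume nd: "\<not> F dvd G"
  define F' G' where "F' = map_poly to_fract F" and "G' = map_poly to_fract G"
  define D where "D = gcd F' G'"
  have Fnz: "F \<noteq> 0" using irr by auto
  hence Dnz: "D \<noteq> 0" by (simp add: D_def F'_def map_poly_eq_0_iff)
  obtain c D0 where cD0: "D = smult c (map_poly to_fract D0)" "content D0 = 1"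
    using content_decompose_fract'[of D] by blast
  have c: "c \<noteq> 0" using Dnz cD0(1) by auto
  have "smult c (map_poly to_fract D0) dvd F'" "smult c (map_poly to_fract D0) dvd G'"
    using cD0(1) by (metis D_def gcd_dvd1, metis D_def gcd_dvd2)
  hence "map_poly to_fract D0 dvd F'" "map_poly to_fract D0 dvd G'"
    using c by (simp_all add: smult_dvd_iff)
  hence DF: "D0 dvd F" and DG: "D0 dvd G" unfolding F'_def G'_def
    using cD0(2) by (auto intro: fract_poly_dvdD')
  have "is_unit D0"
  proof -
    from irreducibleD'[OF irr DF] have "F dvd D0 \<or> is_unit D0" .
    thus ?thesis using DG nd dvd_trans by blast
  qed
  then obtain d where d: "D0 = [:[:d:]:]" "d \<noteq> 0" using unit_pp by blast
  define k where "k = c * to_fract [:d:]"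
  have k: "k \<noteq> 0" "D = [:k:]" using c d cD0(1) by (simp_all add: k_def)
  obtain s t where st: "s * F' + t * G' = D" using bezout_ex[of F' G'] by (auto simp: D_def)
  hence "smult (inverse k) (s * F' + t * G') = 1" using k by (simp add: one_pCons)
  hence st': "smult (inverse k) s * F' + smult (inverse k) t * G' = 1"
    by (simp add: smult_add_right)
  obtain d1 s1 where s1: "d1 \<noteq> 0" "smult (to_fract d1) (smult (inverse k) s) = map_poly to_fract s1"
    using clear_denoms by blast
  obtain d2 t1 where t1: "d2 \<noteq> 0" "smult (to_fract d2) (smult (inverse k) t) = map_poly to_fract t1"
    using clear_denoms by blast
  have "smult (to_fract (d1 * d2)) (smult (inverse k) s * F' + smult (inverse k) t * G') =
        smult (to_fract d2) (map_poly to_fract s1) * F' + smult (to_fract d1) (map_poly to_fract t1) * G'"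
    by (simp add: s1(2)[symmetric] t1(2)[symmetric] algebra_simps smult_add_right)
  hence "[:to_fract (d1 * d2):] = map_poly to_fract (smult d2 s1 * F + smult d1 t1 * G)"
    using st' by (simp add: F'_def G'_def tf.map_smult)
  hence eq: "map_poly to_fract [:d1 * d2:] = map_poly to_fract (smult d2 s1 * F + smult d1 t1 * G)"
    by simp
  hence "[:d1 * d2:] = smult d2 s1 * F + smult d1 t1 * G"
    using Polynomial_Factorial.fract_poly_eq_iff[unfolded tfe] by blast
  hence "eval2 [:d1 * d2:] u v = 0" using Fuv Guv by simp
  hence "ev (d1 * d2) u = 0" by simp
  thus False using ev_nz[OF u] s1(1) t1(1) by auto
qed

lemma kernel:
  fixes F G :: "'a::field_gcd poly poly"
  assumes irr: "irreducible F" and nc: "\<not> (u \<in> range const_fract \<and> v \<in> range const_fract)"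
    and Fuv: "eval2 F u v = 0"
  shows "eval2 G u v = 0 \<longleftrightarrow> F dvd G"
proof
  assume G: "eval2 G u v = 0"
  show "F dvd G"
  proof (cases "u \<in> range const_fract")
    case False
    show ?thesis using kernel_aux[OF irr False Fuv G] by simp
  next
    case True
    hence v: "v \<notin> range const_fract" using nc by blast
    have "sw F dvd sw G"
      by (rule kernel_aux[of _ v u]) (simp_all add: sw_irreducible irr v eval2_sw Fuv G)
    thus ?thesis by (simp add: sw_dvd)
  qed
next
  assume "F dvd G"
  then obtain K where "G = F * K" by (elim dvdE)
  thus "eval2 G u v = 0" using Fuv by simp
qed


section \<open>The subfield k(u,v)\<close>

definition inK :: "'a::field_gcd poly fract \<Rightarrow> 'a poly fract \<Rightarrow> 'a poly fract \<Rightarrow> bool" where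
  "inK u v w \<longleftrightarrow> (\<exists>G H. eval2 H u v \<noteq> 0 \<and> w = eval2 G u v / eval2 H u v)"

lemma frac_add: "b \<noteq> 0 \<Longrightarrow> d \<noteq> 0 \<Longrightarrow> a / b + c / d = (a * d + c * b) / (b * (d::'a::field))"
  by (simp add: field_simps)
lemma frac_mult: "a / b * (c / d) = (a * c) / (b * (d::'a::field))"
  by simp
lemma frac_div: "b \<noteq> 0 \<Longrightarrow> c \<noteq> 0 \<Longrightarrow> d \<noteq> 0 \<Longrightarrow> (a / b) / (c / d) = (a * d) / (b * (c::'a::field))"
  by (simp add: field_simps)

context
  fixes u v :: "'a::field_gcd poly fract"
begin

lemma inK_const: "inK u v (const_fract c)"
  unfolding inK_def by (rule exI[of _ "[:[:c:]:]"], rule exI[of _ 1]) simp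

lemma inK_0: "inK u v 0" using inK_const[of 0] by simp
lemma inK_1: "inK u v 1" using inK_const[of 1] by simp

lemma inK_u: "inK u v u"
  unfolding inK_def by (rule exI[of _ "[:[:0,1:]:]"], rule exI[of _ 1]) simp

lemma inK_v: "inK u v v"
  unfolding inK_def by (rule exI[of _ "[:0,1:]"], rule exI[of _ 1]) (simp add: eval2_alt)

lemma inK_add: "inK u v x \<Longrightarrow> inK u v y \<Longrightarrow> inK u v (x + y)"
  unfolding inK_def
proof (elim exE conjE)
  fix G1 H1 G2 H2
  assume h1: "eval2 H1 u v \<noteq> 0" and x: "x = eval2 G1 u v / eval2 H1 u v"
     and h2: "eval2 H2 u v \<noteq> 0" and y: "y = eval2 G2 u v / eval2 H2 u v"
  show "\<exists>G H. eval2 H u v \<noteq> 0 \<and> x + y = eval2 G u v / eval2 H u v"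
  proof (intro exI conjI)
    show "eval2 (H1 * H2) u v \<noteq> 0" using h1 h2 by simp
    show "x + y = eval2 (G1 * H2 + G2 * H1) u v / eval2 (H1 * H2) u v"
      unfolding x y by (subst frac_add[OF h1 h2]) simp
  qed
qed

lemma inK_mult: "inK u v x \<Longrightarrow> inK u v y \<Longrightarrow> inK u v (x * y)"
  unfolding inK_def
proof (elim exE conjE)
  fix G1 H1 G2 H2
  assume h1: "eval2 H1 u v \<noteq> 0" and x: "x = eval2 G1 u v / eval2 H1 u v"
     and h2: "eval2 H2 u v \<noteq> 0" and y: "y = eval2 G2 u v / eval2 H2 u v"
  show "\<exists>G H. eval2 H u v \<noteq> 0 \<and> x * y = eval2 G u v / eval2 H u v"
  proof (intro exI conjI)
    show "eval2 (H1 * H2) u v \<noteq> 0" using h1 h2 by simp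
    show "x * y = eval2 (G1 * G2) u v / eval2 (H1 * H2) u v"
      unfolding x y by (subst frac_mult) simp
  qed
qed

lemma inK_uminus: "inK u v x \<Longrightarrow> inK u v (- x)"
  unfolding inK_def
proof (elim exE conjE)
  fix G1 H1
  assume h1: "eval2 H1 u v \<noteq> 0" and x: "x = eval2 G1 u v / eval2 H1 u v"
  show "\<exists>G H. eval2 H u v \<noteq> 0 \<and> - x = eval2 G u v / eval2 H u v"
    by (rule exI[of _ "- G1"], rule exI[of _ "H1"]) (use h1 x in simp)
qed

lemma inK_diff: "inK u v x \<Longrightarrow> inK u v y \<Longrightarrow> inK u v (x - y)"
  using inK_add[of x "- y"] inK_uminus[of y] by simp

lemma inK_divide: "inK u v x \<Longrightarrow> inK u v y \<Longrightarrow> inK u v (x / y)"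
proof (cases "y = 0")
  case True thus ?thesis using inK_0 by simp
next
  case False
  assume "inK u v x" "inK u v y"
  thus ?thesis unfolding inK_def
  proof (elim exE conjE)
    fix G1 H1 G2 H2
    assume h1: "eval2 H1 u v \<noteq> 0" and x: "x = eval2 G1 u v / eval2 H1 u v"
       and h2: "eval2 H2 u v \<noteq> 0" and y: "y = eval2 G2 u v / eval2 H2 u v"
    have g2: "eval2 G2 u v \<noteq> 0" using False y by auto
    show "\<exists>G H. eval2 H u v \<noteq> 0 \<and> x / y = eval2 G u v / eval2 H u v"
    proof (intro exI conjI)
      show "eval2 (H1 * G2) u v \<noteq> 0" using h1 g2 by simp
      show "x / y = eval2 (G1 * H2) u v / eval2 (H1 * G2) u v"
        unfolding x y by (subst frac_div[OF h1 g2 h2]) simp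
    qed
  qed
qed

lemma inK_sum: "(\<And>i. i \<in> A \<Longrightarrow> inK u v (f i)) \<Longrightarrow> inK u v (sum f A)"
  by (induction A rule: infinite_finite_induct) (auto simp: inK_0 inK_add)

lemma inK_power: "inK u v x \<Longrightarrow> inK u v (x ^ n)"
  by (induction n) (auto simp: inK_1 inK_mult)

lemma inK_ev: "inK u v t \<Longrightarrow> inK u v (ev a t)"
  by (induction a) (simp_all add: ev_pCons inK_add inK_mult inK_const inK_0)

lemma inK_phi: "inK u v t \<Longrightarrow> inK u v (phi t x)"
  unfolding phi_def by (intro inK_divide inK_ev)

definition inKp :: "'a poly fract poly \<Rightarrow> bool" where
  "inKp p \<longleftrightarrow> (\<forall>i. inK u v (coeff p i))"

lemma inKp_0: "inKp 0" by (simp add: inKp_def inK_0)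
lemma inKp_add: "inKp p \<Longrightarrow> inKp q \<Longrightarrow> inKp (p + q)"
  by (simp add: inKp_def inK_add)
lemma inKp_diff: "inKp p \<Longrightarrow> inKp q \<Longrightarrow> inKp (p - q)"
  by (simp add: inKp_def inK_diff)
lemma inKp_smult: "inK u v c \<Longrightarrow> inKp p \<Longrightarrow> inKp (smult c p)"
  by (simp add: inKp_def inK_mult)
lemma inKp_monom: "inK u v c \<Longrightarrow> inKp (monom c n)"
  by (simp add: inKp_def coeff_monom inK_0)
lemma inKp_mult: "inKp p \<Longrightarrow> inKp q \<Longrightarrow> inKp (p * q)"
  unfolding inKp_def coeff_mult by (auto intro!: inK_sum inK_mult)
lemma inKp_map_phi: "inK u v t \<Longrightarrow> inKp (map_poly (phi t) p)"
proof -
  assume t: "inK u v t"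
  have "phi t 0 = 0" by (simp add: phi_def)
  thus ?thesis using t by (simp add: inKp_def coeff_map_poly inK_phi)
qed

lemma div_K:
  assumes "inKp p" "inKp q" "q \<noteq> 0"
  shows "\<exists>s r. inKp s \<and> inKp r \<and> p = s * q + r \<and> (r = 0 \<or> degree r < degree q)"
  using assms(1)
proof (induction "degree p" arbitrary: p rule: less_induct)
  case less
  show ?case
  proof (cases "p = 0 \<or> degree p < degree q")
    case True
    thus ?thesis using less.prems inKp_0 by (intro exI[of _ 0] exI[of _ p]) auto
  next
    case False
    hence p: "p \<noteq> 0" and dpq: "degree q \<le> degree p" by auto
    define a where "a = lead_coeff p / lead_coeff q"
    define m where "m = monom a (degree p - degree q)"
    define p' where "p' = p - m * q"
    have a0: "a \<noteq> 0" using p assms(3) by (simp add: a_def)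
    have am: "inK u v a" using less.prems assms(2) unfolding a_def inKp_def by (auto intro: inK_divide)
    have im: "inKp m" unfolding m_def using am by (rule inKp_monom)
    have ip': "inKp p'" unfolding p'_def using less.prems im assms(2) by (intro inKp_diff inKp_mult)
    have "degree p' < degree p \<or> p' = 0"
    proof -
      have dm: "degree (m * q) = degree p"
        using assms(3) p dpq a0 by (simp add: m_def degree_mult_eq degree_monom_eq)
      have lc: "lead_coeff (m * q) = lead_coeff p"
        unfolding m_def lead_coeff_mult using a0 assms(3) by (simp add: degree_monom_eq a_def)
      have "coeff p' (degree p) = 0" using dm lc by (simp add: p'_def)
      moreover have "degree p' \<le> degree p" unfolding p'_def using dm
        by (intro degree_diff_le) simp_all
      ultimately show ?thesis
        by (metis le_neq_implies_less leading_coeff_0_iff)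
    qed
    thus ?thesis
    proof
      assume "degree p' < degree p"
      from less.hyps[OF this ip'] obtain s r where sr: "inKp s" "inKp r" "p' = s * q + r"
        "r = 0 \<or> degree r < degree q" by blast
      have "p = (s + m) * q + r" using sr(3) by (simp add: p'_def algebra_simps)
      thus ?thesis using sr im by (intro exI[of _ "s + m"] exI[of _ r]) (auto intro: inKp_add)
    next
      assume "p' = 0"
      hence "p = m * q + 0" by (simp add: p'_def)
      thus ?thesis using im inKp_0 by blast
    qed
  qed
qed

end

lemma nonconst_coeff:
  fixes \<mu> :: "'a::field_gcd poly fract poly"
  assumes nz: "\<mu> \<noteq> 0" and root: "poly \<mu> TT = 0"
  shows "\<exists>j. coeff \<mu> j \<notin> range const_fract"
proof (rule ccontr)
  assume "\<not> ?thesis"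
  hence all: "coeff \<mu> j \<in> range const_fract" for j by blast
  define ci where "ci x = (SOME c. x = const_fract c)" for x :: "'a poly fract"
  have ci: "const_fract (ci x) = x" if "x \<in> range const_fract" for x
  proof -
    from that obtain c where "x = const_fract c" by blast
    hence "x = const_fract (ci x)" unfolding ci_def by (rule someI)
    thus ?thesis by simp
  qed
  have ci0: "ci 0 = 0"
  proof -
    have "const_fract (ci 0) = 0" using ci[of 0] cf.hzero by (metis rangeI)
    thus ?thesis by simp
  qed
  define p where "p = map_poly ci \<mu>"
  have mp: "map_poly const_fract p = \<mu>"
    by (rule poly_eqI) (simp add: p_def coeff_map_poly ci0 ci all)
  have "p \<noteq> 0" using mp nz by auto
  moreover have "poly (map_poly const_fract p) TT = to_fract p" by (rule ev_TT_poly)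
  ultimately show False using root mp by simp
qed

lemma degree_coeff_le_sw: "degree (coeff G i) \<le> degree (sw G)"
proof (cases "coeff G i = 0")
  case False
  hence "coeff (coeff G i) (degree (coeff G i)) \<noteq> 0" by simp
  hence "coeff (coeff (sw G) (degree (coeff G i))) i \<noteq> 0" by (simp add: coeff_sw)
  hence "coeff (sw G) (degree (coeff G i)) \<noteq> 0" by auto
  thus ?thesis by (rule le_degree)
qed simp

definition Qb :: "'a::comm_ring_1 poly \<Rightarrow> 'a poly \<Rightarrow> 'a poly poly" where
  "Qb g h = smult h (map_poly (\<lambda>c. [:c:]) g) - smult g (map_poly (\<lambda>c. [:c:]) h)"

lemma coeff_Qb: "coeff (Qb g h) i = smult (coeff g i) h - smult (coeff h i) g"
  by (simp add: Qb_def coeff_map_poly mult.commute)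

lemma coeff_sw_Qb: "coeff (sw (Qb g h)) j = smult (coeff h j) g - smult (coeff g j) h"
  by (intro poly_eqI) (simp add: coeff_sw coeff_Qb mult.commute)

lemma smult_eq_const:
  fixes g h :: "'a::field_gcd poly"
  assumes h: "h \<noteq> 0" and b: "b \<noteq> 0" and eq: "smult b g = smult a h"
  shows "to_fract g / to_fract h = const_fract (a / b)"
proof -
  have "g = smult (inverse b) (smult b g)" using b by simp
  also have "\<dots> = smult (a / b) h" using eq by (simp add: field_simps)
  finally have "to_fract g = to_fract [:a / b:] * to_fract h" by (metis tf_smult)
  thus ?thesis using h by (simp add: const_fract_tf)
qed

lemma not_prop:
  fixes g h :: "'a::field_gcd poly"
  assumes h: "h \<noteq> 0" and nc: "to_fract g / to_fract h \<notin> range const_fract"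
  shows "\<exists>i j. coeff g i * coeff h j \<noteq> coeff g j * coeff h i"
proof (rule ccontr)
  assume "\<not> ?thesis"
  hence eq: "coeff g i * coeff h j = coeff g j * coeff h i" for i j by blast
  define j where "j = degree h"
  have hj: "coeff h j \<noteq> 0" using h by (simp add: j_def)
  have "smult (coeff h j) g = smult (coeff g j) h"
    by (intro poly_eqI) (simp add: eq mult.commute)
  hence "to_fract g / to_fract h = const_fract (coeff g j / coeff h j)"
    by (rule smult_eq_const[OF h hj])
  thus False using nc by blast
qed

lemma lin_unit:
  fixes g h n :: "'a::field_gcd poly"
  assumes cop: "coprime g h" and h: "h \<noteq> 0" and nc: "to_fract g / to_fract h \<notin> range const_fract"
    and dv: "\<And>j. n dvd smult (coeff h j) g - smult (coeff g j) h"
  shows "is_unit n"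
proof -
  obtain i j where ij: "coeff g i * coeff h j \<noteq> coeff g j * coeff h i"
    using not_prop[OF h nc] by blast
  define \<delta> where "\<delta> = coeff g i * coeff h j - coeff g j * coeff h i"
  have \<delta>: "\<delta> \<noteq> 0" using ij by (simp add: \<delta>_def)
  have "smult (coeff h i) (smult (coeff h j) g - smult (coeff g j) h)
        - smult (coeff h j) (smult (coeff h i) g - smult (coeff g i) h) = smult \<delta> h"
    by (simp add: \<delta>_def algebra_simps smult_diff_right smult_diff_left)
  moreover have "n dvd smult (coeff h i) (smult (coeff h j) g - smult (coeff g j) h)
        - smult (coeff h j) (smult (coeff h i) g - smult (coeff g i) h)"
    using dv[of i] dv[of j] by (meson dvd_diff dvd_smult)
  ultimately have "n dvd smult \<delta> h" by simp
  hence nh: "n dvd h" using \<delta> by (rule dvd_smult_cancel)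
  have "smult (coeff g i) (smult (coeff h j) g - smult (coeff g j) h)
        - smult (coeff g j) (smult (coeff h i) g - smult (coeff g i) h) = smult \<delta> g"
    by (simp add: \<delta>_def algebra_simps smult_diff_right smult_diff_left)
  moreover have "n dvd smult (coeff g i) (smult (coeff h j) g - smult (coeff g j) h)
        - smult (coeff g j) (smult (coeff h i) g - smult (coeff g i) h)"
    using dv[of i] dv[of j] by (meson dvd_diff dvd_smult)
  ultimately have "n dvd smult \<delta> g" by simp
  hence ng: "n dvd g" using \<delta> by (rule dvd_smult_cancel)
  show ?thesis using cop ng nh by (metis coprime_common_divisor)
qed

lemma degree_Qb:
  fixes g h :: "'a::field_gcd poly"
  assumes h: "h \<noteq> 0" and nc: "to_fract g / to_fract h \<notin> range const_fract"
  shows "degree (Qb g h) = max (degree g) (degree h)"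
proof -
  let ?r = "max (degree g) (degree h)"
  have le: "degree (Qb g h) \<le> ?r"
    by (rule degree_le) (auto simp: coeff_Qb coeff_eq_0)
  have "coeff (Qb g h) ?r \<noteq> 0"
  proof
    assume z: "coeff (Qb g h) ?r = 0"
    hence eq: "smult (coeff g ?r) h = smult (coeff h ?r) g" by (simp add: coeff_Qb)
    show False
    proof (cases "coeff h ?r = 0")
      case True
      have g: "g \<noteq> 0" using nc by (auto intro: rangeI[of _ 0])
      have "coeff g ?r \<noteq> 0"
      proof (cases "degree h \<le> degree g")
        case True thus ?thesis using g by simp
      next
        case False
        hence "?r = degree h" by simp
        thus ?thesis using \<open>coeff h ?r = 0\<close> h by simp
      qed
      thus False using eq True h by simp
    next
      case False
      have "to_fract g / to_fract h = const_fract (coeff g ?r / coeff h ?r)"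
        using smult_eq_const[OF h False] eq by simp
      thus False using nc by blast
    qed
  qed
  hence "?r \<le> degree (Qb g h)" by (rule le_degree)
  with le show ?thesis by linarith
qed

lemma fract_Qb:
  fixes g h :: "'a::field_gcd poly"
  assumes h: "h \<noteq> 0"
  shows "map_poly to_fract (Qb g h) = smult (to_fract h)
           (map_poly const_fract g - smult (to_fract g / to_fract h) (map_poly const_fract h))"
  by (intro poly_eqI) (simp add: coeff_map_poly coeff_Qb const_fract_tf algebra_simps h)


section \<open>Lueroth's theorem for k(u,v)\<close>

lemma luroth:
  fixes u v :: "'a::field_gcd poly fract"
  assumes nc: "\<not> (u \<in> range const_fract \<and> v \<in> range const_fract)"
  shows "\<exists>\<theta>. \<theta> \<notin> range const_fract \<and> inK u v \<theta> \<and> (\<forall>w. inK u v w \<longrightarrow> w \<in> range (phi \<theta>))"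
proof -
  define Ncon where "Ncon = {w. inK u v w \<and> w \<notin> range const_fract}"
  have ex: "\<exists>n w. w \<in> Ncon \<and> rdeg w = n" if "w0 \<in> Ncon" for w0 using that by blast
  have "Ncon \<noteq> {}" using nc inK_u inK_v unfolding Ncon_def by blast
  then obtain w0 where w0: "w0 \<in> Ncon" by blast
  define r where "r = (LEAST n. \<exists>w. w \<in> Ncon \<and> rdeg w = n)"
  obtain \<theta> where \<theta>N: "\<theta> \<in> Ncon" and r\<theta>: "rdeg \<theta> = r"
    using LeastI_ex[OF ex[OF w0]] unfolding r_def by blast
  have rmin: "r \<le> rdeg w" if "w \<in> Ncon" for w
    unfolding r_def using that by (intro Least_le) blast
  have \<theta>K: "inK u v \<theta>" and \<theta>nc: "\<theta> \<notin> range const_fract" using \<theta>N by (auto simp: Ncon_def)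
  interpret ph: rhom "phi \<theta>" by (rule rhom_phi[OF \<theta>nc])
  have r0: "r \<noteq> 0" using \<theta>nc r\<theta> rdeg_0_iff by blast
  define g h where "g = num \<theta>" and "h = den \<theta>"
  have h: "h \<noteq> 0" and cop: "coprime g h" and \<theta>gh: "\<theta> = to_fract g / to_fract h"
    using coprime_nd[of \<theta>] w_repr[of \<theta>] by (auto simp: g_def h_def)
  have rgh: "r = max (degree g) (degree h)" using r\<theta> by (simp add: rdeg_def g_def h_def)
  have nc\<theta>: "to_fract g / to_fract h \<notin> range const_fract" using \<theta>nc \<theta>gh by simp
  define P0 where "P0 = map_poly to_fract (Q0 g h)"
  define P\<theta> where "P\<theta> = map_poly (phi \<theta>) P0"
  have P\<theta>_alt: "P\<theta> = map_poly const_fract g - smult \<theta> (map_poly const_fract h)"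
    unfolding P\<theta>_def P0_def by (rule phi_Q0[OF \<theta>nc])
  have P\<theta>root: "poly P\<theta> TT = 0"
    unfolding P\<theta>_def P0_def g_def h_def by (rule phi_Q0_root[OF \<theta>nc])
  have P\<theta>K: "inKp u v P\<theta>" unfolding P\<theta>_def by (rule inKp_map_phi[OF \<theta>K])
  have dP0: "degree P0 = r" unfolding P0_def using degree_Q0[OF h, of g] rgh
    by (simp add: degree_map_poly)
  have dP\<theta>: "degree P\<theta> = r" unfolding P\<theta>_def using dP0 phi_eq_0_iff[OF \<theta>nc]
    by (simp add: degree_map_poly)
  hence P\<theta>nz: "P\<theta> \<noteq> 0" using r0 by auto
  \<comment> \<open>the minimal polynomial of T over k(u,v)\<close>
  define Mset where "Mset = {p. p \<noteq> 0 \<and> inKp u v p \<and> poly p TT = 0}"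
  have P\<theta>M: "P\<theta> \<in> Mset" using P\<theta>nz P\<theta>K P\<theta>root by (simp add: Mset_def)
  have exM: "\<exists>n p. p \<in> Mset \<and> degree p = n" using P\<theta>M by blast
  define d where "d = (LEAST n. \<exists>p. p \<in> Mset \<and> degree p = n)"
  obtain p0 where p0M: "p0 \<in> Mset" and dp0: "degree p0 = d"
    using LeastI_ex[OF exM] unfolding d_def by blast
  have dmin: "d \<le> degree p" if "p \<in> Mset" for p
    unfolding d_def using that by (intro Least_le) blast
  have p0: "p0 \<noteq> 0" "inKp u v p0" "poly p0 TT = 0" using p0M by (auto simp: Mset_def)
  define \<mu> where "\<mu> = smult (inverse (lead_coeff p0)) p0"
  have \<mu>nz: "\<mu> \<noteq> 0" using p0 by (simp add: \<mu>_def)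
  have \<mu>K: "inKp u v \<mu>"
  proof -
    have "inK u v (1 / lead_coeff p0)" using p0(2) by (intro inK_divide inK_1) (simp add: inKp_def)
    hence "inK u v (inverse (lead_coeff p0))" by (simp add: inverse_eq_divide)
    thus ?thesis unfolding \<mu>_def using p0(2) by (rule inKp_smult)
  qed
  have \<mu>root: "poly \<mu> TT = 0" using p0 by (simp add: \<mu>_def)
  have d\<mu>: "degree \<mu> = d" using p0(1) by (simp add: \<mu>_def dp0[symmetric])
  have lc\<mu>: "lead_coeff \<mu> = 1" using p0 by (simp add: \<mu>_def lead_coeff_smult)
  have \<mu>M: "\<mu> \<in> Mset" using \<mu>nz \<mu>K \<mu>root by (simp add: Mset_def)
  have \<mu>dvd: "\<mu> dvd P\<theta>"
  proof -
    obtain s rr where sr: "inKp u v s" "inKp u v rr" "P\<theta> = s * \<mu> + rr" "rr = 0 \<or> degree rr < degree \<mu>"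
      using div_K[OF P\<theta>K \<mu>K \<mu>nz] by blast
    have "poly rr TT = 0" using sr(3) P\<theta>root \<mu>root
      by (metis add_0 mult_zero_right poly_add poly_mult)
    have "rr = 0"
    proof (rule ccontr)
      assume "rr \<noteq> 0"
      hence "rr \<in> Mset" using sr(2) \<open>poly rr TT = 0\<close> by (simp add: Mset_def)
      hence "d \<le> degree rr" by (rule dmin)
      thus False using sr(4) d\<mu> \<open>rr \<noteq> 0\<close> by simp
    qed
    thus ?thesis using sr(3) by simp
  qed
  \<comment> \<open>Gauss\<close>
  obtain c M where cM: "\<mu> = smult c (map_poly to_fract M)" "content M = 1"
    using content_decompose_fract'[of \<mu>] by blast
  have c: "c \<noteq> 0" using \<mu>nz cM(1) by auto
  have "map_poly to_fract M dvd P\<theta>" using \<mu>dvd cM(1) c by (simp add: smult_dvd_iff)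
  hence "map_poly to_fract M dvd smult (to_fract h) P\<theta>" by (rule dvd_smult)
  hence "map_poly to_fract M dvd map_poly to_fract (Qb g h)"
    using fract_Qb[OF h, of g] by (simp add: P\<theta>_alt \<theta>gh)
  hence "M dvd Qb g h" using cM(2) by (rule fract_poly_dvdD')
  then obtain N where QMN: "Qb g h = M * N" by (elim dvdE)
  have dQb: "degree (Qb g h) = r" using degree_Qb[OF h nc\<theta>] rgh by simp
  hence Qbnz: "Qb g h \<noteq> 0" using r0 by auto
  hence Mnz: "M \<noteq> 0" and Nnz: "N \<noteq> 0" using QMN by auto
  have dswQ: "degree (sw (Qb g h)) \<le> r"
  proof (rule degree_le, intro allI impI)
    fix j assume "r < j"
    hence "coeff h j = 0" "coeff g j = 0" using rgh by (auto simp: coeff_eq_0)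
    thus "coeff (sw (Qb g h)) j = 0" by (simp add: coeff_sw_Qb)
  qed
  obtain j0 where j0: "coeff \<mu> j0 \<notin> range const_fract" using nonconst_coeff[OF \<mu>nz \<mu>root] by blast
  have "inK u v (coeff \<mu> j0)" using \<mu>K by (simp add: inKp_def)
  hence "r \<le> rdeg (coeff \<mu> j0)" using j0 by (intro rmin) (simp add: Ncon_def)
  also have "rdeg (coeff \<mu> j0) \<le> degree (sw M)"
  proof -
    have dM: "degree (map_poly to_fract M) = degree M" by (simp add: degree_map_poly)
    have d\<mu>M: "degree \<mu> = degree M" using cM(1) c dM by simp
    have A: "1 = c * to_fract (lead_coeff M)"
      using lc\<mu> cM(1) d\<mu>M by (simp add: coeff_map_poly)
    have B: "coeff \<mu> j0 = c * to_fract (coeff M j0)" using cM(1) by (simp add: coeff_map_poly)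
    have L: "to_fract (lead_coeff M) \<noteq> 0" using A by auto
    have "c = 1 / to_fract (lead_coeff M)" using A L by (simp add: field_simps)
    hence "coeff \<mu> j0 = to_fract (coeff M j0) / to_fract (lead_coeff M)" using B by simp
    hence "rdeg (coeff \<mu> j0) \<le> max (degree (coeff M j0)) (degree (lead_coeff M))"
      using Mnz by (intro rdeg_le) auto
    also have "\<dots> \<le> degree (sw M)"
      using degree_coeff_le_sw[of M j0] degree_coeff_le_sw[of M "degree M"] by simp
    finally show ?thesis .
  qed
  finally have rM: "r \<le> degree (sw M)" .
  have "degree (sw (Qb g h)) = degree (sw M) + degree (sw N)"
    using QMN degree_sw_mult[OF Mnz Nnz] by simp
  hence dN: "degree (sw N) = 0" using dswQ rM by linarith
  define n where "n = coeff (sw N) 0"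
  have Nn: "sw N = [:n:]" using dN unfolding n_def by (metis degree_0_id)
  have "is_unit n"
  proof (rule lin_unit[OF cop h nc\<theta>])
    fix j
    have "sw (Qb g h) = sw M * [:n:]" using QMN Nn by (simp add: sw.hmult)
    hence "coeff (sw (Qb g h)) j = coeff (sw M) j * n" by simp
    thus "n dvd smult (coeff h j) g - smult (coeff g j) h" by (simp add: coeff_sw_Qb)
  qed
  then obtain n0 where n0: "n = [:n0:]" "n0 \<noteq> 0" using unit_const_poly_field by blast
  have "N = [:[:n0:]:]" using sw_degree0[OF dN] n0 by (simp add: n_def)
  hence "degree (Qb g h) = degree M" using QMN n0 by simp
  moreover have "degree \<mu> = degree M" using cM(1) c by (simp add: degree_map_poly)
  ultimately have dr: "d = r" using dQb d\<mu> by simp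
  have "w \<in> range (phi \<theta>)" if wK: "inK u v w" for w
  proof -
    define p q where "p = num w" and "q = den w"
    have q: "q \<noteq> 0" and wpq: "w = to_fract p / to_fract q" using w_repr[of w] by (auto simp: p_def q_def)
    define p' q' where "p' = map_poly to_fract (map_poly (\<lambda>c. [:c:]) p)"
      and "q' = map_poly to_fract (map_poly (\<lambda>c. [:c:]) q)"
    have vp: "poly (map_poly (phi \<theta>) p') TT = to_fract p"
      unfolding p'_def map_phi_tf[OF \<theta>nc] map_ev_cpoly by (rule ev_TT_poly)
    have vq: "poly (map_poly (phi \<theta>) q') TT = to_fract q"
      unfolding q'_def map_phi_tf[OF \<theta>nc] map_ev_cpoly by (rule ev_TT_poly)
    define r1 r2 where "r1 = p' mod P0" and "r2 = q' mod P0"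
    have P0nz: "P0 \<noteq> 0" using dP0 r0 by auto
    have vP0: "poly (map_poly (phi \<theta>) P0) TT = 0" using P\<theta>root by (simp add: P\<theta>_def)
    have vr1: "poly (map_poly (phi \<theta>) r1) TT = to_fract p"
    proof -
      have "p' = (p' div P0) * P0 + r1" by (simp add: r1_def)
      hence "poly (map_poly (phi \<theta>) p') TT = poly (map_poly (phi \<theta>) ((p' div P0) * P0 + r1)) TT"
        by (rule arg_cong[where f="\<lambda>x. poly (map_poly (phi \<theta>) x) TT"])
      also have "\<dots> = poly (map_poly (phi \<theta>) r1) TT" using vP0 by (simp add: poly_mult)
      finally have "poly (map_poly (phi \<theta>) p') TT = poly (map_poly (phi \<theta>) r1) TT" .
      thus ?thesis using vp by simp
    qed
    have vr2: "poly (map_poly (phi \<theta>) r2) TT = to_fract q"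
    proof -
      have "q' = (q' div P0) * P0 + r2" by (simp add: r2_def)
      hence "poly (map_poly (phi \<theta>) q') TT = poly (map_poly (phi \<theta>) ((q' div P0) * P0 + r2)) TT"
        by (rule arg_cong[where f="\<lambda>x. poly (map_poly (phi \<theta>) x) TT"])
      also have "\<dots> = poly (map_poly (phi \<theta>) r2) TT" using vP0 by (simp add: poly_mult)
      finally have "poly (map_poly (phi \<theta>) q') TT = poly (map_poly (phi \<theta>) r2) TT" .
      thus ?thesis using vq by simp
    qed
    have deg_lt: "degree (map_poly (phi \<theta>) x) < r" if "x = p' mod P0 \<or> x = q' mod P0" for x
    proof -
      have "x = 0 \<or> degree x < degree P0" using that degree_mod_less[OF P0nz] by auto
      thus ?thesis using dP0 r0 phi_eq_0_iff[OF \<theta>nc] by (auto simp: degree_map_poly)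
    qed
    define Rp where "Rp = map_poly (phi \<theta>) r1 - smult w (map_poly (phi \<theta>) r2)"
    have RpK: "inKp u v Rp" unfolding Rp_def
      by (intro inKp_diff inKp_smult wK inKp_map_phi[OF \<theta>K])
    have "poly Rp TT = to_fract p - w * to_fract q" by (simp add: Rp_def vr1 vr2)
    also have "\<dots> = 0" using wpq q by simp
    finally have Rproot: "poly Rp TT = 0" .
    have "degree Rp < r"
    proof -
      have "degree Rp \<le> max (degree (map_poly (phi \<theta>) r1)) (degree (map_poly (phi \<theta>) r2))"
        unfolding Rp_def using degree_smult_le
        by (intro degree_diff_le) (auto intro: le_trans)
      thus ?thesis using deg_lt[of r1] deg_lt[of r2] by (simp add: r1_def r2_def)
    qed
    hence Rp0: "Rp = 0" using dmin[of Rp] RpK Rproot dr by (auto simp: Mset_def)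
    have "r2 \<noteq> 0" using vr2 q by auto
    then obtain j where j: "coeff r2 j \<noteq> 0" by (metis leading_coeff_0_iff)
    have "coeff Rp j = 0" using Rp0 by simp
    hence "phi \<theta> (coeff r1 j) = w * phi \<theta> (coeff r2 j)" by (simp add: Rp_def coeff_map_poly)
    hence "w = phi \<theta> (coeff r1 j) / phi \<theta> (coeff r2 j)"
      using j phi_eq_0_iff[OF \<theta>nc] by (simp add: field_simps)
    also have "\<dots> = phi \<theta> (coeff r1 j / coeff r2 j)" by (simp add: phi_divide[OF \<theta>nc])
    finally show ?thesis by blast
  qed
  thus ?thesis using \<theta>nc \<theta>K by blast
qed


lemma eval2_const_const:
  "eval2 G (const_fract a) (const_fract b) = const_fract (poly (map_poly (\<lambda>c. poly c a) G) b)"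
proof -
  have "(\<lambda>c. ev c (const_fract a)) = (\<lambda>c. const_fract (poly c a))"
    by (rule ext) (simp add: ev_def cf.poly_map)
  hence "eval2 G (const_fract a) (const_fract b) =
         poly (map_poly (\<lambda>c. const_fract (poly c a)) G) (const_fract b)"
    by (simp add: eval2_alt)
  also have "map_poly (\<lambda>c. const_fract (poly c a)) G = map_poly const_fract (map_poly (\<lambda>c. poly c a) G)"
    by (subst map_poly_map_poly) (simp_all add: o_def)
  finally show ?thesis by (simp add: cf.poly_map)
qed

lemma TT_nonconst: "(TT :: 'a::field_gcd poly fract) \<notin> range const_fract"
  using rdeg_TT rdeg_0_iff by (metis one_neq_zero)

lemma hom_eval2:
  assumes f: "rhom f" and fc: "\<And>c. f (const_fract c) = const_fract c"
  shows "f (eval2 G a b) = eval2 G (f a) (f b)"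
proof -
  interpret f: rhom f by fact
  have fev: "f (ev c a) = ev c (f a)" for c
  proof -
    have "f (ev c a) = poly (map_poly f (map_poly const_fract c)) (f a)"
      by (simp add: ev_def f.poly_map)
    also have "map_poly f (map_poly const_fract c) = map_poly const_fract c"
      by (subst map_poly_map_poly) (simp_all add: o_def fc)
    finally show ?thesis by (simp add: ev_def)
  qed
  have "f (eval2 G a b) = poly (map_poly f (map_poly (\<lambda>c. ev c a) G)) (f b)"
    by (simp add: eval2_alt f.poly_map)
  also have "map_poly f (map_poly (\<lambda>c. ev c a) G) = map_poly (\<lambda>c. ev c (f a)) G"
    by (subst map_poly_map_poly) (simp_all add: o_def fev)
  finally show ?thesis by (simp add: eval2_alt)
qed

lemma inK_all:
  assumes "inK a b TT"
  shows "inK a b w"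
proof -
  have "w = ev (num w) TT / ev (den w) TT" using w_repr[of w] by (simp add: ev_TT)
  thus ?thesis using assms by (metis inK_divide inK_ev)
qed

theorem main_gcd:
  fixes F :: "'a::field_gcd poly poly"
  assumes "irreducible F"
  shows "k_rational F \<longleftrightarrow>
    (\<exists>x y z :: 'a poly.
        z \<noteq> 0 \<and>
        \<not> (to_fract x / to_fract z \<in> range const_fract \<and>
           to_fract y / to_fract z \<in> range const_fract) \<and>
        eval2 F (to_fract x / to_fract z) (to_fract y / to_fract z) = 0 \<and>
        max (degree x) (max (degree y) (degree z)) \<le> degX F + degY F)"
proof
  assume "k_rational F"
  then obtain u v where ker: "\<And>G. eval2 G u v = 0 \<longleftrightarrow> F dvd G"
    and gen: "\<And>w. \<exists>G H. eval2 H u v \<noteq> 0 \<and> w = eval2 G u v / eval2 H u v"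
    unfolding k_rational_def by blast
  obtain G H where GH: "eval2 H u v \<noteq> 0" "TT = eval2 G u v / eval2 H u v" using gen by blast
  have nc: "\<not> (u \<in> range const_fract \<and> v \<in> range const_fract)"
  proof
    assume "u \<in> range const_fract \<and> v \<in> range const_fract"
    then obtain a b where ab: "u = const_fract a" "v = const_fract b" by blast
    define X Y where "X = poly (map_poly (\<lambda>c. poly c a) G) b" and "Y = poly (map_poly (\<lambda>c. poly c a) H) b"
    have "TT = const_fract X / const_fract Y"
      using GH(2) by (simp add: ab eval2_const_const X_def Y_def)
    hence "TT = const_fract (X / Y)" by (simp only: cf_divide)
    hence "(TT :: 'a poly fract) \<in> range const_fract" by blast
    thus False using TT_nonconst by blast
  qed
  have Fuv: "eval2 F u v = 0" using ker by simp
  have F0: "F \<noteq> 0" using assms by auto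
  have bu: "rdeg u \<le> degY F"
  proof (cases "u \<in> range const_fract")
    case True thus ?thesis using rdeg_0_iff[of u] rdeg_0_iff[of v] by simp
  next
    case False
    thus ?thesis unfolding degY_def using bound[OF False F0 Fuv GH(1) GH(2)] by simp
  qed
  have bv: "rdeg v \<le> degX F"
  proof (cases "v \<in> range const_fract")
    case True thus ?thesis using rdeg_0_iff[of u] rdeg_0_iff[of v] by simp
  next
    case False
    have "rdeg v \<le> degree (sw F)"
      by (rule bound[OF False, where P="sw F" and H="sw H" and G="sw G" and v=u]) (use F0 Fuv GH in \<open>simp_all add: eval2_sw\<close>)
    thus ?thesis by (simp add: degree_sw)
  qed
  define x y z where "x = num u * den v" and "y = num v * den u" and "z = den u * den v"
  have z: "z \<noteq> 0" by (simp add: z_def)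
  have xz: "to_fract x / to_fract z = u"
    using w_repr[of u] by (simp add: x_def z_def)
  have yz: "to_fract y / to_fract z = v"
    using w_repr[of v] by (simp add: y_def z_def)
  have "degree x \<le> rdeg u + rdeg v" unfolding x_def
    by (rule order.trans[OF degree_mult_le]) (simp add: rdeg_def add_mono)
  moreover have "degree y \<le> rdeg u + rdeg v" unfolding y_def
    by (rule order.trans[OF degree_mult_le]) (simp add: rdeg_def add_mono)
  moreover have "degree z \<le> rdeg u + rdeg v" unfolding z_def
    by (rule order.trans[OF degree_mult_le]) (simp add: rdeg_def add_mono)
  ultimately have "max (degree x) (max (degree y) (degree z)) \<le> degX F + degY F"
    using bu bv by simp
  thus "\<exists>x y z :: 'a poly.
        z \<noteq> 0 \<and>
        \<not> (to_fract x / to_fract z \<in> range const_fract \<and>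
           to_fract y / to_fract z \<in> range const_fract) \<and>
        eval2 F (to_fract x / to_fract z) (to_fract y / to_fract z) = 0 \<and>
        max (degree x) (max (degree y) (degree z)) \<le> degX F + degY F"
    using z xz yz nc Fuv by blast
next
  assume "\<exists>x y z :: 'a poly.
        z \<noteq> 0 \<and>
        \<not> (to_fract x / to_fract z \<in> range const_fract \<and>
           to_fract y / to_fract z \<in> range const_fract) \<and>
        eval2 F (to_fract x / to_fract z) (to_fract y / to_fract z) = 0 \<and>
        max (degree x) (max (degree y) (degree z)) \<le> degX F + degY F"
  then obtain u v :: "'a poly fract" where nc: "\<not> (u \<in> range const_fract \<and> v \<in> range const_fract)"
    and Fuv: "eval2 F u v = 0" by blast
  obtain \<theta> where \<theta>: "\<theta> \<notin> range const_fract" "inK u v \<theta>" "\<And>w. inK u v w \<Longrightarrow> w \<in> range (phi \<theta>)"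
    using luroth[OF nc] by blast
  interpret ph: rhom "phi \<theta>" by (rule rhom_phi[OF \<theta>(1)])
  obtain a where a: "u = phi \<theta> a" using \<theta>(3)[OF inK_u] by blast
  obtain b where b: "v = phi \<theta> b" using \<theta>(3)[OF inK_v] by blast
  have pe: "phi \<theta> (eval2 G a b) = eval2 G u v" for G
    unfolding a b by (rule hom_eval2[OF rhom_phi[OF \<theta>(1)] phi_const[OF \<theta>(1)]])
  have ker: "eval2 G a b = 0 \<longleftrightarrow> F dvd G" for G
  proof -
    have "eval2 G a b = 0 \<longleftrightarrow> eval2 G u v = 0"
      using pe[of G] phi_eq_0_iff[OF \<theta>(1)] by metis
    also have "\<dots> \<longleftrightarrow> F dvd G" by (rule kernel[OF assms nc Fuv])
    finally show ?thesis .
  qed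
  obtain G H where GH: "eval2 H u v \<noteq> 0" "\<theta> = eval2 G u v / eval2 H u v"
    using \<theta>(2) unfolding inK_def by blast
  have H0: "eval2 H a b \<noteq> 0" using GH(1) pe[of H] by auto
  have "phi \<theta> (eval2 G a b / eval2 H a b) = eval2 G u v / eval2 H u v"
    by (simp only: phi_divide[OF \<theta>(1)] pe)
  also have "\<dots> = phi \<theta> TT" using GH(2) phi_TT[OF \<theta>(1)] by simp
  finally have "phi \<theta> TT = phi \<theta> (eval2 G a b / eval2 H a b)" by simp
  hence "TT = eval2 G a b / eval2 H a b" using phi_inj[OF \<theta>(1)] by blast
  hence "inK a b TT" unfolding inK_def using H0 by blast
  hence gen: "inK a b w" for w by (rule inK_all)
  show "k_rational F"
    unfolding k_rational_def using assms ker gen unfolding inK_def by blast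
qed


section \<open>Transfer along a ring isomorphism\<close>

locale riso = rhom h for h :: "'a::comm_ring_1 \<Rightarrow> 'b::comm_ring_1" +
  assumes hinj: "h x = h y \<Longrightarrow> x = y" and hsurj: "\<exists>x. z = h x"
begin

lemma h_eq_iff[simp]: "h x = h y \<longleftrightarrow> x = y" using hinj by blast
lemma h_eq_0_iff[simp]: "h x = 0 \<longleftrightarrow> x = 0" using h_eq_iff[of x 0] by simp

lemma h_dvd_iff: "h x dvd h y \<longleftrightarrow> x dvd y"
proof
  assume "h x dvd h y"
  then obtain c where c: "h y = h x * c" by (elim dvdE)
  obtain c0 where "c = h c0" using hsurj by blast
  hence "h y = h (x * c0)" using c by simp
  hence "y = x * c0" by (rule hinj)
  thus "x dvd y" by simp
next
  assume "x dvd y"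
  then obtain c where "y = x * c" by (elim dvdE)
  thus "h x dvd h y" by simp
qed

lemma h_unit_iff: "((h x) dvd 1) \<longleftrightarrow> (x dvd 1)"
  using h_dvd_iff[of x 1] by simp

lemma h_irreducible_iff: "irreducible (h x) \<longleftrightarrow> irreducible x"
proof
  assume irr: "irreducible (h x)"
  show "irreducible x"
  proof (rule irreducibleI)
    show "x \<noteq> 0" using irr by auto
    show "\<not> (x dvd 1)" using irr by (simp add: irreducible_def h_unit_iff)
    fix a b assume "x = a * b"
    hence "h x = h a * h b" by simp
    hence "((h a) dvd 1) \<or> ((h b) dvd 1)" using irr by (metis irreducibleD)
    thus "(a dvd 1) \<or> (b dvd 1)" by (simp add: h_unit_iff)
  qed
next
  assume irr: "irreducible x"
  show "irreducible (h x)"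
  proof (rule irreducibleI)
    show "h x \<noteq> 0" using irr by auto
    show "\<not> ((h x) dvd 1)" using irr by (simp add: irreducible_def h_unit_iff)
    fix a b assume ab: "h x = a * b"
    obtain a0 b0 where "a = h a0" "b = h b0" using hsurj by metis
    hence "h x = h (a0 * b0)" using ab by simp
    hence "x = a0 * b0" by (rule hinj)
    hence "(a0 dvd 1) \<or> (b0 dvd 1)" using irr by (metis irreducibleD)
    thus "(a dvd 1) \<or> (b dvd 1)" using \<open>a = h a0\<close> \<open>b = h b0\<close> by (simp add: h_unit_iff)
  qed
qed

lemma map_riso: "riso (map_poly h)"
proof -
  interpret m: rhom "map_poly h" by (rule rhom_map)
  show ?thesis
  proof (unfold_locales)
    fix p q assume "map_poly h p = map_poly h q"
    thus "p = q" by (metis (mono_tags) coeff_map_poly hzero poly_eqI h_eq_iff)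
  next
    fix q :: "'b poly"
    define g where "g y = (SOME x. y = h x)" for y
    have g: "h (g y) = y" for y unfolding g_def using hsurj by (metis (mono_tags) someI_ex)
    have g0: "g 0 = 0"
    proof -
      have "h (g 0) = h 0" using g[of 0] by simp
      thus ?thesis by (rule hinj)
    qed
    have "map_poly h (map_poly g q) = q"
      by (subst map_poly_map_poly) (simp_all add: o_def g g0 map_poly_idI)
    thus "\<exists>p. q = map_poly h p" by metis
  qed
qed

end

locale fiso = riso f for f :: "'a::field \<Rightarrow> 'b::field"
begin

interpretation P: riso "map_poly f" by (rule map_riso)
interpretation PP: riso "map_poly (map_poly f)" by (rule P.map_riso)

lemma degree_P[simp]: "degree (map_poly f p) = degree p"
  by (simp add: degree_map_poly)

lemma degX_PP: "degX (map_poly (map_poly f) F) = degX F"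
  by (simp add: degX_def degree_map_poly coeff_map_poly)

lemma degY_PP: "degY (map_poly (map_poly f) F) = degY F"
  by (simp add: degY_def degree_map_poly)

definition Fr :: "'a poly fract \<Rightarrow> 'b poly fract" where
  "Fr x = (let ab = (SOME ab. snd ab \<noteq> 0 \<and> x = Fract (fst ab) (snd ab))
           in Fract (map_poly f (fst ab)) (map_poly f (snd ab)))"

lemma Fr_Fract: assumes b: "b \<noteq> 0" shows "Fr (Fract a b) = Fract (map_poly f a) (map_poly f b)"
proof -
  define ab where "ab = (SOME ab. snd ab \<noteq> 0 \<and> Fract a b = Fract (fst ab) (snd ab))"
  have "snd ab \<noteq> 0 \<and> Fract a b = Fract (fst ab) (snd ab)"
    unfolding ab_def by (rule someI[of _ "(a, b)"]) (simp add: b)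
  hence ab: "snd ab \<noteq> 0" "a * snd ab = fst ab * b" using b by (auto simp: eq_fract)
  hence "map_poly f a * map_poly f (snd ab) = map_poly f (fst ab) * map_poly f b"
    by (metis P.hmult)
  hence "Fract (map_poly f (fst ab)) (map_poly f (snd ab)) = Fract (map_poly f a) (map_poly f b)"
    using ab(1) b by (simp add: eq_fract)
  thus ?thesis unfolding Fr_def ab_def[symmetric] by (simp add: Let_def)
qed

lemma Fr_tf[simp]: "Fr (to_fract p) = to_fract (map_poly f p)"
  unfolding Defs.to_fract_def by (simp add: Fr_Fract)

lemma rhom_Fr: "rhom Fr"
proof
  fix x y :: "'a poly fract"
  obtain a b where x: "x = Fract a b" "b \<noteq> 0" by (cases x)
  obtain c d where y: "y = Fract c d" "d \<noteq> 0" by (cases y)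
  show "Fr (x + y) = Fr x + Fr y" using x y by (simp add: Fr_Fract)
  show "Fr (x * y) = Fr x * Fr y" using x y by (simp add: Fr_Fract)
next
  show "Fr 1 = 1" using Fr_Fract[of 1 1] by (simp add: One_fract_def)
qed

interpretation Fr: rhom Fr by (rule rhom_Fr)

lemma Fr_riso: "riso Fr"
proof unfold_locales
  fix x y :: "'a poly fract"
  assume eq: "Fr x = Fr y"
  obtain a b where x: "x = Fract a b" "b \<noteq> 0" by (cases x)
  obtain c d where y: "y = Fract c d" "d \<noteq> 0" by (cases y)
  have "map_poly f a * map_poly f d = map_poly f c * map_poly f b"
    using eq x y by (simp add: Fr_Fract eq_fract)
  hence "a * d = c * b" by (metis P.hmult P.h_eq_iff)
  thus "x = y" using x y by (simp add: eq_fract)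
next
  fix y :: "'b poly fract"
  obtain a' b' where y: "y = Fract a' b'" "b' \<noteq> 0" by (cases y)
  obtain a b where "a' = map_poly f a" "b' = map_poly f b" using P.hsurj by metis
  moreover have "b \<noteq> 0" using y(2) calculation by auto
  ultimately show "\<exists>x. y = Fr x" using y by (metis Fr_Fract)
qed

interpretation Fr: riso Fr by (rule Fr_riso)

lemma Fr_divide: "Fr (x / y) = Fr x / Fr y"
proof (cases "y = 0")
  case False
  have "Fr (x / y) * Fr y = Fr x" using False by (simp flip: Fr.hmult)
  thus ?thesis using False by (simp add: field_simps)
qed simp

lemma Fr_const[simp]: "Fr (const_fract c) = const_fract (f c)"
  by (simp add: const_fract_tf)

lemma Fr_range_const: "Fr w \<in> range const_fract \<longleftrightarrow> w \<in> range const_fract"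
proof
  assume "Fr w \<in> range const_fract"
  then obtain c where c: "Fr w = const_fract c" by blast
  obtain c0 where "c = f c0" using hsurj by blast
  hence "Fr w = Fr (const_fract c0)" using c by simp
  hence "w = const_fract c0" by (rule Fr.hinj)
  thus "w \<in> range const_fract" by simp
qed auto

lemma Fr_ev: "Fr (ev a u) = ev (map_poly f a) (Fr u)"
  by (induction a) (simp_all add: ev_pCons)

lemma Fr_eval2: "Fr (eval2 G u v) = eval2 (map_poly (map_poly f) G) (Fr u) (Fr v)"
  by (induction G) (simp_all add: eval2_pCons Fr_ev)

lemma k_rational_iff: "k_rational (map_poly (map_poly f) F) \<longleftrightarrow> k_rational F"
proof
  assume "k_rational (map_poly (map_poly f) F)"
  then obtain u' v' where irr: "irreducible (map_poly (map_poly f) F)"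
    and ker: "\<And>G. eval2 G u' v' = 0 \<longleftrightarrow> map_poly (map_poly f) F dvd G"
    and gen: "\<And>w. \<exists>G H. eval2 H u' v' \<noteq> 0 \<and> w = eval2 G u' v' / eval2 H u' v'"
    unfolding k_rational_def by blast
  obtain u v where uv: "u' = Fr u" "v' = Fr v" using Fr.hsurj by metis
  have i: "irreducible F" using irr by (simp add: PP.h_irreducible_iff)
  have k: "eval2 G u v = 0 \<longleftrightarrow> F dvd G" for G
  proof -
    have "eval2 G u v = 0 \<longleftrightarrow> Fr (eval2 G u v) = 0" by simp
    also have "\<dots> \<longleftrightarrow> map_poly (map_poly f) F dvd map_poly (map_poly f) G"
      by (simp only: Fr_eval2 uv[symmetric] ker)
    also have "\<dots> \<longleftrightarrow> F dvd G" by (rule PP.h_dvd_iff)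
    finally show ?thesis .
  qed
  have gg: "\<exists>G H. eval2 H u v \<noteq> 0 \<and> w = eval2 G u v / eval2 H u v" for w
  proof -
    obtain G' H' where GH': "eval2 H' u' v' \<noteq> 0" "Fr w = eval2 G' u' v' / eval2 H' u' v'"
      using gen by blast
    obtain G H where GH: "G' = map_poly (map_poly f) G" "H' = map_poly (map_poly f) H"
      using PP.hsurj by metis
    have "Fr (eval2 H u v) \<noteq> 0" using GH'(1) by (simp add: Fr_eval2 uv GH)
    hence H0: "eval2 H u v \<noteq> 0" by simp
    have "Fr w = Fr (eval2 G u v / eval2 H u v)"
      using GH'(2) by (simp add: Fr_divide Fr_eval2 uv GH)
    hence "w = eval2 G u v / eval2 H u v" by (rule Fr.hinj)
    thus ?thesis using H0 by blast
  qed
  show "k_rational F" unfolding k_rational_def using i k gg by blast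
next
  assume "k_rational F"
  then obtain u v where irr: "irreducible F"
    and ker: "\<And>G. eval2 G u v = 0 \<longleftrightarrow> F dvd G"
    and gen: "\<And>w. \<exists>G H. eval2 H u v \<noteq> 0 \<and> w = eval2 G u v / eval2 H u v"
    unfolding k_rational_def by blast
  have i: "irreducible (map_poly (map_poly f) F)" using irr by (simp add: PP.h_irreducible_iff)
  have k: "eval2 G' (Fr u) (Fr v) = 0 \<longleftrightarrow> map_poly (map_poly f) F dvd G'" for G'
  proof -
    obtain G where G: "G' = map_poly (map_poly f) G" using PP.hsurj by metis
    have "eval2 G' (Fr u) (Fr v) = 0 \<longleftrightarrow> Fr (eval2 G u v) = 0" by (simp add: Fr_eval2 G)
    also have "\<dots> \<longleftrightarrow> F dvd G" using ker by simp
    also have "\<dots> \<longleftrightarrow> map_poly (map_poly f) F dvd G'" by (simp add: G PP.h_dvd_iff)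
    finally show ?thesis .
  qed
  have gg: "\<exists>G H. eval2 H (Fr u) (Fr v) \<noteq> 0 \<and> w' = eval2 G (Fr u) (Fr v) / eval2 H (Fr u) (Fr v)" for w'
  proof -
    obtain w where w: "w' = Fr w" using Fr.hsurj by metis
    obtain G H where GH: "eval2 H u v \<noteq> 0" "w = eval2 G u v / eval2 H u v" using gen by blast
    have "eval2 (map_poly (map_poly f) H) (Fr u) (Fr v) \<noteq> 0" using GH(1) by (simp flip: Fr_eval2)
    moreover have "w' = eval2 (map_poly (map_poly f) G) (Fr u) (Fr v) /
                        eval2 (map_poly (map_poly f) H) (Fr u) (Fr v)"
      using GH(2) w by (simp add: Fr_divide Fr_eval2)
    ultimately show ?thesis by blast
  qed
  show "k_rational (map_poly (map_poly f) F)" unfolding k_rational_def using i k gg by blast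
qed

lemma Fr_tf_div: "Fr (to_fract x / to_fract z) = to_fract (map_poly f x) / to_fract (map_poly f z)"
  by (simp add: Fr_divide)

lemma rhs_iff:
  "(\<exists>x y z :: 'b poly.
        z \<noteq> 0 \<and>
        \<not> (to_fract x / to_fract z \<in> range const_fract \<and>
           to_fract y / to_fract z \<in> range const_fract) \<and>
        eval2 (map_poly (map_poly f) F) (to_fract x / to_fract z) (to_fract y / to_fract z) = 0 \<and>
        max (degree x) (max (degree y) (degree z)) \<le> degX (map_poly (map_poly f) F) + degY (map_poly (map_poly f) F))
   \<longleftrightarrow>
   (\<exists>x y z :: 'a poly.
        z \<noteq> 0 \<and>
        \<not> (to_fract x / to_fract z \<in> range const_fract \<and>
           to_fract y / to_fract z \<in> range const_fract) \<and>
        eval2 F (to_fract x / to_fract z) (to_fract y / to_fract z) = 0 \<and>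
        max (degree x) (max (degree y) (degree z)) \<le> degX F + degY F)"
  (is "?L \<longleftrightarrow> ?R")
proof
  assume ?L
  then obtain x' y' z' :: "'b poly" where H: "z' \<noteq> 0"
        "\<not> (to_fract x' / to_fract z' \<in> range const_fract \<and>
           to_fract y' / to_fract z' \<in> range const_fract)"
        "eval2 (map_poly (map_poly f) F) (to_fract x' / to_fract z') (to_fract y' / to_fract z') = 0"
        "max (degree x') (max (degree y') (degree z')) \<le> degX (map_poly (map_poly f) F) + degY (map_poly (map_poly f) F)"
    by blast
  obtain x y z where xyz: "x' = map_poly f x" "y' = map_poly f y" "z' = map_poly f z"
    using P.hsurj by metis
  show ?R
  proof (intro exI conjI)
    show "z \<noteq> 0" using H(1) xyz by auto
    show "\<not> (to_fract x / to_fract z \<in> range const_fract \<and> to_fract y / to_fract z \<in> range const_fract)"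
      using H(2) by (simp add: xyz flip: Fr_tf_div add: Fr_range_const)
    have "Fr (eval2 F (to_fract x / to_fract z) (to_fract y / to_fract z)) = 0"
      using H(3) by (simp add: xyz Fr_eval2 Fr_tf_div)
    thus "eval2 F (to_fract x / to_fract z) (to_fract y / to_fract z) = 0" by simp
    show "max (degree x) (max (degree y) (degree z)) \<le> degX F + degY F"
      using H(4) by (simp add: xyz degX_PP degY_PP)
  qed
next
  assume ?R
  then obtain x y z :: "'a poly" where H: "z \<noteq> 0"
        "\<not> (to_fract x / to_fract z \<in> range const_fract \<and>
           to_fract y / to_fract z \<in> range const_fract)"
        "eval2 F (to_fract x / to_fract z) (to_fract y / to_fract z) = 0"
        "max (degree x) (max (degree y) (degree z)) \<le> degX F + degY F"
    by blast
  show ?L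
  proof (intro exI conjI)
    show "map_poly f z \<noteq> 0" using H(1) by simp
    show "\<not> (to_fract (map_poly f x) / to_fract (map_poly f z) \<in> range const_fract \<and>
             to_fract (map_poly f y) / to_fract (map_poly f z) \<in> range const_fract)"
      using H(2) by (simp flip: Fr_tf_div add: Fr_range_const)
    show "eval2 (map_poly (map_poly f) F) (to_fract (map_poly f x) / to_fract (map_poly f z))
            (to_fract (map_poly f y) / to_fract (map_poly f z)) = 0"
      using H(3) by (simp flip: Fr_tf_div Fr_eval2)
    show "max (degree (map_poly f x)) (max (degree (map_poly f y)) (degree (map_poly f z)))
          \<le> degX (map_poly (map_poly f) F) + degY (map_poly (map_poly f) F)"
      using H(4) by (simp add: degX_PP degY_PP)
  qed
qed

end


section \<open>A copy of an arbitrary field with the trivial gcd structure\<close>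

typedef 'a wr = "UNIV :: 'a::field set" morphisms unwr wr by auto
setup_lifting type_definition_wr

instantiation wr :: (field) field
begin
lift_definition zero_wr :: "'a wr" is 0 .
lift_definition one_wr :: "'a wr" is 1 .
lift_definition plus_wr :: "'a wr \<Rightarrow> 'a wr \<Rightarrow> 'a wr" is "(+)" .
lift_definition minus_wr :: "'a wr \<Rightarrow> 'a wr \<Rightarrow> 'a wr" is "(-)" .
lift_definition uminus_wr :: "'a wr \<Rightarrow> 'a wr" is "uminus" .
lift_definition times_wr :: "'a wr \<Rightarrow> 'a wr \<Rightarrow> 'a wr" is "(*)" .
lift_definition inverse_wr :: "'a wr \<Rightarrow> 'a wr" is "inverse" .
lift_definition divide_wr :: "'a wr \<Rightarrow> 'a wr \<Rightarrow> 'a wr" is "(/)" .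
instance by standard (transfer; simp add: algebra_simps divide_inverse)+
end

instantiation wr :: (field)
  "{unique_euclidean_ring, normalization_euclidean_semiring, normalization_semidom_multiplicative}"
begin
definition [simp]: "normalize_wr = (\<lambda>x::'a wr. if x = 0 then 0 else (1::'a wr))"
definition [simp]: "unit_factor_wr = (\<lambda>x::'a wr. x)"
definition [simp]: "modulo_wr = (\<lambda>x y::'a wr. if y = 0 then x else (0::'a wr))"
definition [simp]: "euclidean_size_wr = (\<lambda>x::'a wr. if x = 0 then 0 else (1::nat))"
definition [simp]: "division_segment (x :: 'a wr) = (1::'a wr)"
instance
  by standard
    (simp_all add: dvd_field_iff field_split_simps split: if_splits)
end

instantiation wr :: (field) euclidean_ring_gcd
begin
definition gcd_wr :: "'a wr \<Rightarrow> 'a wr \<Rightarrow> 'a wr" where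
  "gcd_wr = Euclidean_Algorithm.gcd"
definition lcm_wr :: "'a wr \<Rightarrow> 'a wr \<Rightarrow> 'a wr" where
  "lcm_wr = Euclidean_Algorithm.lcm"
definition Gcd_wr :: "'a wr set \<Rightarrow> 'a wr" where
 "Gcd_wr = Euclidean_Algorithm.Gcd"
definition Lcm_wr :: "'a wr set \<Rightarrow> 'a wr" where
 "Lcm_wr = Euclidean_Algorithm.Lcm"
instance by standard (simp_all add: gcd_wr_def lcm_wr_def Gcd_wr_def Lcm_wr_def)
end

instance wr :: (field) field_gcd ..

lemma fiso_wr: "fiso (wr :: 'a::field \<Rightarrow> 'a wr)"
proof unfold_locales
  fix x y :: 'a
  show "wr (x + y) = wr x + wr y"
    by (metis plus_wr.rep_eq unwr_inverse wr_inverse UNIV_I)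
  show "wr (x * y) = wr x * wr y"
    by (metis times_wr.rep_eq unwr_inverse wr_inverse UNIV_I)
  show "wr x = wr y \<Longrightarrow> x = y" by (metis wr_inverse UNIV_I)
next
  show "wr 1 = 1" by (metis one_wr.rep_eq unwr_inverse)
next
  fix z :: "'a wr" show "\<exists>x. z = wr x" by (metis unwr_inverse)
qed

theorem mainTheorem5:
  fixes F :: "'a::field poly poly"
  assumes "irreducible F"
  shows "k_rational F \<longleftrightarrow>
    (\<exists>x y z :: 'a poly.
        z \<noteq> 0 \<and>
        \<not> (to_fract x / to_fract z \<in> range const_fract \<and>
           to_fract y / to_fract z \<in> range const_fract) \<and>
        eval2 F (to_fract x / to_fract z) (to_fract y / to_fract z) = 0 \<and>
        max (degree x) (max (degree y) (degree z)) \<le> degX F + degY F)"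
proof -
  interpret I: fiso "wr :: 'a \<Rightarrow> 'a wr" by (rule fiso_wr)
  interpret PP: riso "map_poly (map_poly (wr :: 'a \<Rightarrow> 'a wr))"
    by (rule I.map_riso[THEN riso.map_riso])
  have irr: "irreducible (map_poly (map_poly wr) F :: 'a wr poly poly)"
    using assms by (simp add: PP.h_irreducible_iff)
  show ?thesis
    using main_gcd[OF irr] I.k_rational_iff[of F] I.rhs_iff[of F] by simp
qed


end
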